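(* Let $T$ be a Bienaym\'e–Galton–Watson tree with $Z_0=1$ and offspring mean $1<\gamma<\infty$, extinction probability $q$, with i.i.d. edge resistances with distribution function $F$ on $[0,\infty)$. Then for every $\varepsilon>0$, $$\Pr\{R^\varepsilon(T)=\infty\}=\Pr\{R(T)=\infty\}=q.$$
   Context: Ulam–Harris-labelled tree, root $\langle 0\rangle$, generations $T_k$, $T_{[k]}$ the subtree on generations $0,\dots,k$. $R(T_{[k]})$ is the effective resistance between the root and $T_k$ (vertices of $T_k$ identified) in $T_{[k]}$, $\infty$ if $T_k=\emptyset$; $R(T)=\lim_k R(T_{[k]})\in[0,\infty]$. $R^\varepsilon(T)$ is the same quantity when each edge resistance $R(e)$ is replaced by $R(e)+\varepsilon$. $q=\Pr\{Z_n=0\text{ eventually}\}$. *)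

theory Defs
  imports "HOL-Probability.Probability"
begin

text \<open>Ulam--Harris labels are stored as REVERSED lists of child indices:
  the root is [], and the i-th child (i = 0,1,...) of vertex v is i # v.
  A realisation of the tree is given by the offspring numbers N v of all
  potential vertices v; v belongs to the tree iff its ancestors do and
  its index is below its parent's offspring number.\<close>

fun in_tree :: "(nat list \<Rightarrow> nat) \<Rightarrow> nat list \<Rightarrow> bool" where
  "in_tree N [] = True"
| "in_tree N (i # v) = (in_tree N v \<and> i < N v)"

definition generation :: "(nat list \<Rightarrow> nat) \<Rightarrow> nat \<Rightarrow> nat list set" where
  "generation N k = {v. length v = k \<and> in_tree N v}"

text \<open>res N Rs eps m v: effective resistance, in the tree below v truncated
  m generations below v, between v and the (identified) vertices m generations
  below v, where the edge from the parent of w to w has resistance Rs w + eps.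
  Series/parallel laws in [0,\<infinity>]; it is \<infinity> if there are no vertices
  m generations below v (empty sum of conductances is 0, inverse 0 = \<infinity>).\<close>
fun res :: "(nat list \<Rightarrow> nat) \<Rightarrow> (nat list \<Rightarrow> real) \<Rightarrow> real \<Rightarrow> nat \<Rightarrow> nat list \<Rightarrow> ennreal" where
  "res N Rs eps 0 v = 0"
| "res N Rs eps (Suc m) v =
     inverse (\<Sum>i<N v. inverse (ennreal (Rs (i # v) + eps) + res N Rs eps m (i # v)))"

definition res_trunc :: "(nat list \<Rightarrow> nat) \<Rightarrow> (nat list \<Rightarrow> real) \<Rightarrow> real \<Rightarrow> nat \<Rightarrow> ennreal" where
  "res_trunc N Rs eps k = res N Rs eps k []"

definition res_tree :: "(nat list \<Rightarrow> nat) \<Rightarrow> (nat list \<Rightarrow> real) \<Rightarrow> real \<Rightarrow> ennreal" where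
  "res_tree N Rs eps = lim (\<lambda>k. res_trunc N Rs eps k)"

end

theory Submission
  imports Defs
begin


lemma ennreal_inverse_antimono: "(a::ennreal) \<le> b \<Longrightarrow> inverse b \<le> inverse a"
proof (cases "a = 0")
  case True then show ?thesis by simp
next
  case False
  assume ab: "a \<le> b"
  then have "0 < b" using False by (metis not_gr_zero order_less_le_trans)
  show ?thesis
  proof (cases "b = top")
    case True then show ?thesis by simp
  next
    case False
    then obtain rb where rb: "b = ennreal rb" "0 \<le> rb" by (cases b) auto
    have "a \<noteq> top" using ab False by (metis top.extremum_uniqueI)
    then obtain ra where ra: "a = ennreal ra" "0 \<le> ra" by (cases a) auto
    have "0 < ra" using \<open>a \<noteq> 0\<close> ra by (auto simp: le_less)
    have "ra \<le> rb" using ab ra rb by simp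
    then show ?thesis using ra rb \<open>0 < ra\<close>
      by (simp add: inverse_ennreal le_imp_inverse_le)
  qed
qed

lemma tendsto_inverse_ennreal:
  assumes "(f \<longlongrightarrow> (a::ennreal)) F"
  shows "((\<lambda>x. inverse (f x)) \<longlongrightarrow> inverse a) F"
proof -
  have "isCont inverse a"
    using continuous_on_inverse_ennreal[OF continuous_on_id[of UNIV]]
    by (simp add: continuous_on_eq_continuous_at)
  then show ?thesis using assms by (rule isCont_tendsto_compose)
qed

lemma res_shift: "res N Rs e m (w @ [i]) = res (\<lambda>u. N (u @ [i])) (\<lambda>u. Rs (u @ [i])) e m w"
proof (induction m arbitrary: w)
  case 0 show ?case by simp
next
  case (Suc m)
  have "\<And>j. res N Rs e m (j # w @ [i]) = res (\<lambda>u. N (u @ [i])) (\<lambda>u. Rs (u @ [i])) e m (j # w)"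
    using Suc.IH by (metis append_Cons)
  then show ?case by simp
qed

lemma res_mono_Suc: "res N Rs e m v \<le> res N Rs e (Suc m) v"
proof (induction m arbitrary: v)
  case 0 show ?case by simp
next
  case (Suc m)
  have "(\<Sum>i<N v. inverse (ennreal (Rs (i # v) + e) + res N Rs e (Suc m) (i # v)))
     \<le> (\<Sum>i<N v. inverse (ennreal (Rs (i # v) + e) + res N Rs e m (i # v)))"
    by (intro sum_mono ennreal_inverse_antimono add_left_mono Suc.IH)
  then show ?case by (simp add: ennreal_inverse_antimono)
qed

lemma res_incseq: "incseq (\<lambda>k. res N Rs e k v)"
  by (rule incseq_SucI) (rule res_mono_Suc)

lemma res_mono_eps: "e \<le> e' \<Longrightarrow> res N Rs e m v \<le> res N Rs e' m v"
proof (induction m arbitrary: v)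
  case 0 show ?case by simp
next
  case (Suc m)
  have "(\<Sum>i<N v. inverse (ennreal (Rs (i # v) + e') + res N Rs e' m (i # v)))
     \<le> (\<Sum>i<N v. inverse (ennreal (Rs (i # v) + e) + res N Rs e m (i # v)))"
    using Suc by (intro sum_mono ennreal_inverse_antimono add_mono ennreal_leI) auto
  then show ?case by (simp add: ennreal_inverse_antimono)
qed

definition Rtv :: "(nat list \<Rightarrow> nat) \<Rightarrow> (nat list \<Rightarrow> real) \<Rightarrow> real \<Rightarrow> nat list \<Rightarrow> ennreal" where
  "Rtv N Rs e v = (SUP k. res N Rs e k v)"

lemma res_tree_Sup: "res_tree N Rs e = Rtv N Rs e []"
  unfolding res_tree_def res_trunc_def Rtv_def
  by (rule limI) (rule LIMSEQ_SUP[OF res_incseq])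

lemma Rtv_rec: "Rtv N Rs e v = inverse (\<Sum>i<N v. inverse (ennreal (Rs (i # v) + e) + Rtv N Rs e (i # v)))"
proof -
  have "(\<lambda>k. res N Rs e (Suc k) v) \<longlonglongrightarrow> Rtv N Rs e v"
    unfolding Rtv_def by (rule LIMSEQ_Suc[OF LIMSEQ_SUP[OF res_incseq]])
  moreover have "(\<lambda>k. res N Rs e (Suc k) v) \<longlonglongrightarrow>
      inverse (\<Sum>i<N v. inverse (ennreal (Rs (i # v) + e) + Rtv N Rs e (i # v)))"
    unfolding res.simps Rtv_def
    by (intro tendsto_inverse_ennreal tendsto_sum tendsto_add tendsto_const LIMSEQ_SUP res_incseq)
  ultimately show ?thesis by (rule LIMSEQ_unique)
qed

lemma Rtv_top_iff: "Rtv N Rs e v = top \<longleftrightarrow> (\<forall>i<N v. Rtv N Rs e (i # v) = top)"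
  by (subst Rtv_rec) (auto simp: ennreal_add_eq_top)

lemma Rtv_shift: "Rtv N Rs e (w @ [i]) = Rtv (\<lambda>u. N (u @ [i])) (\<lambda>u. Rs (u @ [i])) e w"
  unfolding Rtv_def by (simp add: res_shift)

lemma Rtv_mono_eps: "e \<le> e' \<Longrightarrow> Rtv N Rs e v \<le> Rtv N Rs e' v"
  unfolding Rtv_def by (intro SUP_mono) (auto intro: res_mono_eps)

lemma in_tree_append: "in_tree N (w @ [i]) \<longleftrightarrow> i < N [] \<and> in_tree (\<lambda>u. N (u @ [i])) w"
  by (induction w) auto

lemma in_tree_tl: "in_tree N (i # v) \<Longrightarrow> in_tree N v" by simp

lemma generation_empty_Suc:
  assumes "generation N n = {}" shows "generation N (Suc n) = {}"
proof (rule ccontr)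
  assume "generation N (Suc n) \<noteq> {}"
  then obtain v where v: "length v = Suc n" "in_tree N v" by (auto simp: generation_def)
  then obtain i u where "v = i # u" by (cases v) auto
  with v have "u \<in> generation N n" by (auto simp: generation_def)
  with assms show False by blast
qed

lemma generation_empty_mono:
  assumes "generation N n = {}" "n \<le> m" shows "generation N m = {}"
  using assms(2)
proof (induction rule: dec_induct)
  case base show ?case using assms(1) .
next
  case (step k) then show ?case using generation_empty_Suc by blast
qed

lemma res_top_if_empty:
  "in_tree N v \<Longrightarrow> (\<forall>w. length w = n \<longrightarrow> \<not> in_tree N (w @ v)) \<Longrightarrow> res N Rs e n v = top"
proof (induction n arbitrary: v)
  case 0
  from 0(2) have "\<not> in_tree N ([] @ v)" by simp
  with 0(1) show ?case by simp
next
  case (Suc n)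
  have "res N Rs e n (i # v) = top" if "i < N v" for i
  proof (rule Suc.IH)
    show "in_tree N (i # v)" using Suc.prems that by simp
    show "\<forall>w. length w = n \<longrightarrow> \<not> in_tree N (w @ i # v)"
    proof (intro allI impI)
      fix w :: "nat list" assume "length w = n"
      then have "length (w @ [i]) = Suc n" by simp
      then have "\<not> in_tree N ((w @ [i]) @ v)" using Suc.prems(2) by blast
      then show "\<not> in_tree N (w @ i # v)" by simp
    qed
  qed
  then show ?case by simp
qed

lemma ext_res_top: "generation N n = {} \<Longrightarrow> res_tree N Rs e = top"
proof -
  assume "generation N n = {}"
  then have "\<forall>w. length w = n \<longrightarrow> \<not> in_tree N (w @ [])"
    unfolding generation_def by auto
  then have "res N Rs e n [] = top"
    by (intro res_top_if_empty) simp_all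
  moreover have "res N Rs e n [] \<le> Rtv N Rs e []" unfolding Rtv_def by (rule SUP_upper) simp
  ultimately show ?thesis unfolding res_tree_Sup by (simp add: top_unique)
qed

lemma generation_Suc_empty_iff:
  "generation N (Suc n) = {} \<longleftrightarrow> (\<forall>i<N []. generation (\<lambda>u. N (u @ [i])) n = {})"
proof -
  have "generation N (Suc n) \<noteq> {} \<longleftrightarrow> (\<exists>i<N []. generation (\<lambda>u. N (u @ [i])) n \<noteq> {})"
  proof
    assume "generation N (Suc n) \<noteq> {}"
    then obtain v where v: "length v = Suc n" "in_tree N v" by (auto simp: generation_def)
    obtain w i where w: "v = w @ [i]" "length w = n" using v(1) by (metis length_Suc_conv_rev)
    have "i < N [] \<and> in_tree (\<lambda>u. N (u @ [i])) w" using v(2) unfolding w(1) in_tree_append by simp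
    then show "\<exists>i<N []. generation (\<lambda>u. N (u @ [i])) n \<noteq> {}"
      using w(2) by (auto simp: generation_def)
  next
    assume "\<exists>i<N []. generation (\<lambda>u. N (u @ [i])) n \<noteq> {}"
    then obtain i w where iw: "i < N []" "length w = n" "in_tree (\<lambda>u. N (u @ [i])) w"
      by (auto simp: generation_def)
    then have "in_tree N (w @ [i])" unfolding in_tree_append by simp
    then have "w @ [i] \<in> generation N (Suc n)" using iw(2) by (simp add: generation_def)
    then show "generation N (Suc n) \<noteq> {}" by blast
  qed
  then show ?thesis by blast
qed

definition extinct :: "(nat list \<Rightarrow> nat) \<Rightarrow> bool" where
  "extinct N \<longleftrightarrow> (\<exists>n. generation N n = {})"

lemma extinct_iff: "extinct N \<longleftrightarrow> (\<forall>i<N []. extinct (\<lambda>u. N (u @ [i])))"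
proof
  assume "extinct N"
  then obtain n where n: "generation N n = {}" by (auto simp: extinct_def)
  have "[] \<in> generation N 0" by (simp add: generation_def)
  then have "n \<noteq> 0" using n by (metis empty_iff)
  then obtain m where "n = Suc m" by (cases n) auto
  then have "generation N (Suc m) = {}" using n by simp
  then have "\<forall>i<N []. generation (\<lambda>u. N (u @ [i])) m = {}"
    by (simp only: generation_Suc_empty_iff)
  then show "\<forall>i<N []. extinct (\<lambda>u. N (u @ [i]))"
    unfolding extinct_def by blast
next
  assume a: "\<forall>i<N []. extinct (\<lambda>u. N (u @ [i]))"
  then have "\<forall>i\<in>{..<N []}. \<exists>n. generation (\<lambda>u. N (u @ [i])) n = {}" by (auto simp: extinct_def)
  from bchoice[OF this] obtain f where f: "\<forall>i\<in>{..<N []}. generation (\<lambda>u. N (u @ [i])) (f i) = {}"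
    by blast
  define n where "n = Max (f ` {..<N []})"
  have "generation (\<lambda>u. N (u @ [i])) n = {}" if "i < N []" for i
  proof (rule generation_empty_mono)
    show "generation (\<lambda>u. N (u @ [i])) (f i) = {}" using f that by simp
    show "f i \<le> n" unfolding n_def by (rule Max_ge) (simp_all add: that)
  qed
  then have "generation N (Suc n) = {}" by (simp add: generation_Suc_empty_iff)
  then show "extinct N" by (auto simp: extinct_def)
qed

lemma extinct_alt: "(\<exists>n0. \<forall>n\<ge>n0. generation N n = {}) \<longleftrightarrow> extinct N"
  unfolding extinct_def
proof
  assume "\<exists>n0. \<forall>n\<ge>n0. generation N n = {}"
  then show "\<exists>n. generation N n = {}" by blast
next
  assume "\<exists>n. generation N n = {}"
  then obtain n where "generation N n = {}" by blast
  then have "\<forall>m\<ge>n. generation N m = {}" using generation_empty_mono by blast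
  then show "\<exists>n0. \<forall>n\<ge>n0. generation N n = {}" by blast
qed


type_synonym idx = "nat list + nat list"
type_synonym cfg = "idx \<Rightarrow> real"

definition NN :: "cfg \<Rightarrow> nat list \<Rightarrow> nat" where "NN z v = nat \<lfloor>z (Inl v)\<rfloor>"
definition RR :: "cfg \<Rightarrow> nat list \<Rightarrow> real" where "RR z v = z (Inr v)"
definition shj :: "nat \<Rightarrow> idx \<Rightarrow> idx" where "shj i = map_sum (\<lambda>w. w @ [i]) (\<lambda>w. w @ [i])"
definition sh :: "nat \<Rightarrow> cfg \<Rightarrow> cfg" where "sh i z = (\<lambda>j. z (shj i j))"

abbreviation SP :: "cfg measure" where "SP \<equiv> PiM UNIV (\<lambda>_. borel)"

lemma NN_sh: "NN (sh i z) = (\<lambda>u. NN z (u @ [i]))" by (auto simp: NN_def sh_def shj_def)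
lemma RR_sh: "RR (sh i z) = (\<lambda>u. RR z (u @ [i]))" by (auto simp: RR_def sh_def shj_def)

lemma shj_neq_root[simp]: "shj i j \<noteq> Inl []" "shj i j \<noteq> Inr []"
  by (cases j; simp add: shj_def)+

lemma shj_disj: "i \<noteq> i' \<Longrightarrow> shj i j \<noteq> shj i' j'"
  by (cases j; cases j'; simp add: shj_def)

lemma shj_inj: "inj (shj i)"
  unfolding inj_def by (intro allI; case_tac x; case_tac y; simp add: shj_def)

lemma space_SP[simp]: "space SP = UNIV"
  by (auto simp: space_PiM PiE_def Pi_def extensional_def)

lemma meas_coord[measurable]: "(\<lambda>z. z j) \<in> borel_measurable SP"
  by (rule measurable_component_singleton) simp

lemma meas_sh[measurable]: "sh i \<in> measurable SP SP"
proof -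
  have "(\<lambda>z j. z (shj i j)) \<in> measurable SP SP"
    by (rule measurable_PiM_single') (auto intro: measurable_component_singleton)
  then show ?thesis unfolding sh_def[abs_def] .
qed

lemma meas_NN[measurable]: "(\<lambda>z. NN z v) \<in> measurable SP (count_space UNIV)"
proof -
  have "(\<lambda>z. \<lfloor>z (Inl v)\<rfloor>) \<in> measurable SP (count_space UNIV)" by measurable
  moreover have "(\<lambda>x::int. nat x) \<in> measurable (count_space UNIV) (count_space UNIV)" by simp
  ultimately show ?thesis unfolding NN_def by (rule measurable_compose)
qed

lemma meas_RR[measurable]: "(\<lambda>z. RR z v) \<in> borel_measurable SP"
  unfolding RR_def by measurable

lemma pred_NN_less[measurable]: "Measurable.pred SP (\<lambda>z. i < NN z v)"
  by (rule measurable_compose[OF meas_NN]) simp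

lemma pred_NN_eq[measurable]: "Measurable.pred SP (\<lambda>z. NN z v = n)"
  by (rule measurable_compose[OF meas_NN]) simp

locale gwp =
  fixes M :: "'a measure" and N :: "nat list \<Rightarrow> 'a \<Rightarrow> nat" and Rs :: "nat list \<Rightarrow> 'a \<Rightarrow> real"
  assumes PS: "prob_space M"
    and N_meas: "\<And>v. N v \<in> measurable M (count_space UNIV)"
    and Rs_meas: "\<And>v. Rs v \<in> borel_measurable M"
    and indep: "prob_space.indep_vars M (\<lambda>_. borel)
                  (\<lambda>j. case j of Inl v \<Rightarrow> (\<lambda>\<omega>. real (N v \<omega>)) | Inr v \<Rightarrow> Rs v) UNIV"
    and N_ident: "\<And>v. distr M (count_space UNIV) (N v) = distr M (count_space UNIV) (N [])"
    and Rs_ident: "\<And>v. distr M borel (Rs v) = distr M borel (Rs [])"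
begin

sublocale MM: prob_space M by (rule PS)

definition XX :: "idx \<Rightarrow> 'a \<Rightarrow> real" where
  "XX j = (case j of Inl v \<Rightarrow> (\<lambda>\<omega>. real (N v \<omega>)) | Inr v \<Rightarrow> Rs v)"
definition Xf :: "'a \<Rightarrow> cfg" where "Xf \<omega> = (\<lambda>j. XX j \<omega>)"
definition P :: "cfg measure" where "P = distr M SP Xf"
definition nu :: "idx \<Rightarrow> real measure" where "nu j = distr M borel (XX j)"

lemma realN_meas: "(\<lambda>\<omega>. real (N v \<omega>)) \<in> borel_measurable M"
  by (rule measurable_compose[OF N_meas]) simp

lemma XX_meas: "XX j \<in> borel_measurable M"
  by (cases j) (simp_all add: XX_def realN_meas Rs_meas)

lemma Xf_meas: "Xf \<in> measurable M SP"
proof -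
  have "(\<lambda>\<omega> j. XX j \<omega>) \<in> measurable M SP"
    by (rule measurable_PiM_single') (auto intro: XX_meas)
  then show ?thesis unfolding Xf_def[abs_def] .
qed

lemma NN_Xf: "NN (Xf \<omega>) v = N v \<omega>" by (simp add: NN_def Xf_def XX_def)
lemma RR_Xf: "RR (Xf \<omega>) v = Rs v \<omega>" by (simp add: RR_def Xf_def XX_def)

lemma indep_XX: "MM.indep_vars (\<lambda>_. borel) XX UNIV"
proof -
  have "XX = (\<lambda>j. case j of Inl v \<Rightarrow> (\<lambda>\<omega>. real (N v \<omega>)) | Inr v \<Rightarrow> Rs v)"
    by (simp add: fun_eq_iff XX_def)
  then show ?thesis using indep by simp
qed

lemma P_eq: "P = PiM UNIV nu"
proof -
  have "distr M SP (\<lambda>x. \<lambda>i\<in>UNIV. XX i x) = PiM UNIV (\<lambda>i. distr M borel (XX i))"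
    using MM.indep_vars_iff_distr_eq_PiM[where I=UNIV and X=XX and M'="\<lambda>_. borel"] indep_XX XX_meas by simp
  moreover have "(\<lambda>x. \<lambda>i\<in>UNIV. XX i x) = Xf" by (simp add: fun_eq_iff Xf_def)
  ultimately show ?thesis by (simp add: P_def nu_def[abs_def])
qed

lemma prob_nu: "prob_space (nu j)"
  unfolding nu_def by (rule MM.prob_space_distr[OF XX_meas])

lemma sets_nu[simp]: "sets (nu j) = sets borel" by (simp add: nu_def)

lemma nu_Inl: "nu (Inl v) = nu (Inl [])"
proof -
  have "nu (Inl v) = distr (distr M (count_space UNIV) (N v)) borel real" for v
    unfolding nu_def XX_def by (simp add: distr_distr N_meas comp_def)
  then show ?thesis using N_ident by metis
qed

lemma nu_Inr: "nu (Inr v) = nu (Inr [])"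
  unfolding nu_def XX_def using Rs_ident by simp

lemma nu_shj: "nu (shj i j) = nu j"
proof (cases j)
  case (Inl v)
  then have "nu (shj i j) = nu (Inl (v @ [i]))" by (simp add: shj_def)
  also have "\<dots> = nu (Inl [])" by (rule nu_Inl)
  also have "\<dots> = nu (Inl v)" by (rule nu_Inl[symmetric])
  finally show ?thesis using Inl by simp
next
  case (Inr v)
  then have "nu (shj i j) = nu (Inr (v @ [i]))" by (simp add: shj_def)
  also have "\<dots> = nu (Inr [])" by (rule nu_Inr)
  also have "\<dots> = nu (Inr v)" by (rule nu_Inr[symmetric])
  finally show ?thesis using Inr by simp
qed

lemma P_prob: "prob_space P"
  unfolding P_def by (rule MM.prob_space_distr[OF Xf_meas])

sublocale PP: prob_space P by (rule P_prob)

lemma sets_P[simp, measurable_cong]: "sets P = sets SP" by (simp add: P_def)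
lemma space_P[simp]: "space P = UNIV" by (simp add: P_def)

lemma sets_PiM_nu: "sets (PiM UNIV nu) = sets SP"
  by (rule sets_PiM_cong) simp_all

lemma P_sh: "distr P SP (sh i) = P"
proof -
  have "distr (PiM UNIV nu) (PiM UNIV (\<lambda>n. nu (shj i n))) (\<lambda>\<omega>. \<lambda>n\<in>UNIV. \<omega> (shj i n))
        = PiM UNIV (\<lambda>n. nu (shj i n))"
    by (rule distr_PiM_reindex) (auto simp: prob_nu shj_inj)
  then have "distr (PiM UNIV nu) (PiM UNIV nu) (sh i) = PiM UNIV nu"
    by (simp add: nu_shj sh_def[abs_def] restrict_UNIV)
  moreover have "distr (PiM UNIV nu) (PiM UNIV nu) (sh i) = distr P SP (sh i)"
    by (rule distr_cong) (simp_all add: P_eq sets_PiM_nu)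
  ultimately show ?thesis by (simp add: P_eq)
qed

lemma P_indep: "PP.indep_vars (\<lambda>_. borel) (\<lambda>j z. z j) UNIV"
proof -
  have "distr P SP (\<lambda>x. \<lambda>i\<in>UNIV. x i) = P"
  proof -
    have "distr P SP (\<lambda>x. \<lambda>i\<in>UNIV. x i) = distr P P (\<lambda>x. x)"
      by (rule distr_cong) (simp_all add: restrict_UNIV)
    then show ?thesis by simp
  qed
  moreover have "distr P borel (\<lambda>x. x i) = nu i" for i
  proof -
    have "distr P borel (\<lambda>x. x i) = distr (PiM UNIV nu) (nu i) (\<lambda>x. x i)"
      by (rule distr_cong) (simp_all add: P_eq)
    also have "\<dots> = nu i" by (rule distr_PiM_component) (simp_all add: prob_nu)
    finally show ?thesis .
  qed
  ultimately have "distr P SP (\<lambda>x. \<lambda>i\<in>UNIV. x i) = PiM UNIV (\<lambda>i. distr P borel (\<lambda>x. x i))"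
    by (simp add: P_eq)
  then show ?thesis
    by (subst PP.indep_vars_iff_distr_eq_PiM) (simp_all add: measurable_component_singleton)
qed

lemma GI:
  fixes H :: "'i \<Rightarrow> cfg \<Rightarrow> real" and K :: "'i \<Rightarrow> idx set"
  assumes fin: "finite I" and disj: "disjoint_family_on K I"
    and Hm: "\<And>l. l \<in> I \<Longrightarrow> H l \<in> borel_measurable SP"
    and Hdep: "\<And>l z z'. l \<in> I \<Longrightarrow> (\<And>j. j \<in> K l \<Longrightarrow> z j = z' j) \<Longrightarrow> H l z = H l z'"
    and Hint: "\<And>l. l \<in> I \<Longrightarrow> integrable P (H l)"
  shows "(\<integral>z. (\<Prod>l\<in>I. H l z) \<partial>P) = (\<Prod>l\<in>I. \<integral>z. H l z \<partial>P)"
proof -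
  define ext where "ext l y = (\<lambda>j. if j \<in> K l then y j else 0)" for l and y :: cfg
  have ind1: "PP.indep_vars (\<lambda>l. PiM (K l) (\<lambda>_. borel)) (\<lambda>l z. restrict (\<lambda>j. z j) (K l)) I"
    by (rule PP.indep_vars_restrict[OF P_indep]) (use disj in auto)
  have ext_meas: "ext l \<in> measurable (PiM (K l) (\<lambda>_. borel)) SP" for l
  proof -
    have "(\<lambda>y j. if j \<in> K l then y j else 0) \<in> measurable (PiM (K l) (\<lambda>_. borel)) SP"
      apply (rule measurable_PiM_single')
      subgoal for j by (cases "j \<in> K l") (simp_all add: measurable_component_singleton)
      by simp
    then show ?thesis unfolding ext_def[abs_def] .
  qed
  have ind2: "PP.indep_vars (\<lambda>_. borel) (\<lambda>l z. H l (ext l (restrict (\<lambda>j. z j) (K l)))) I"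
    by (rule PP.indep_vars_compose2[OF ind1]) (rule measurable_compose[OF ext_meas Hm])
  have eq: "(\<lambda>z. H l (ext l (restrict (\<lambda>j. z j) (K l)))) = H l" if "l \<in> I" for l
    by (rule ext, rule Hdep[OF that]) (simp add: ext_def)
  have ind3: "PP.indep_vars (\<lambda>_. borel) H I"
    using PP.indep_vars_cong[of I I "\<lambda>l z. H l (ext l (restrict (\<lambda>j. z j) (K l)))" H "\<lambda>_. borel" "\<lambda>_. borel"] ind2 eq
    by simp
  show ?thesis by (rule PP.indep_vars_lebesgue_integral[OF fin ind3 Hint])
qed

end


lemma prod_if_all:
  assumes "finite A"
  shows "(\<Prod>i\<in>A. if Q i then (1::real) else 0) = (if \<forall>i\<in>A. Q i then 1 else 0)"
  using assms by (induction A rule: finite_induct) auto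

lemma shj_neq_root'[simp]: "Inl [] \<noteq> shj i j" "Inr [] \<noteq> shj i j"
  using shj_neq_root[of i j] by metis+

lemma sets_Collect_SP: "Measurable.pred SP Q \<Longrightarrow> {z. Q z} \<in> sets SP"
  by (simp add: pred_def)

lemma meas_res[measurable]: "(\<lambda>z. res (NN z) (RR z) e m v) \<in> borel_measurable SP"
proof (induction m arbitrary: v)
  case 0 then show ?case by simp
next
  case (Suc m)
  note IH[measurable] = Suc.IH
  have G: "(\<lambda>z. inverse (\<Sum>i<n. inverse (ennreal (RR z (i # v) + e) + res (NN z) (RR z) e m (i # v))))
           \<in> borel_measurable SP" for n
    by measurable
  have "(\<lambda>z. (\<lambda>n z. inverse (\<Sum>i<n. inverse (ennreal (RR z (i # v) + e) + res (NN z) (RR z) e m (i # v)))) (NN z v) z)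
      \<in> borel_measurable SP"
    by (rule measurable_compose_countable'[OF G meas_NN]) simp
  then show ?case by simp
qed

definition Rt :: "real \<Rightarrow> cfg \<Rightarrow> ennreal" where "Rt e z = Rtv (NN z) (RR z) e []"

lemma meas_Rt[measurable]: "Rt e \<in> borel_measurable SP"
  unfolding Rt_def[abs_def] Rtv_def by measurable

lemma Rt_sh: "Rtv (NN z) (RR z) e [i] = Rt e (sh i z)"
  using Rtv_shift[of "NN z" "RR z" e "[]" i] by (simp add: Rt_def NN_sh RR_sh)

lemma Rt_top_iff: "Rt e z = top \<longleftrightarrow> (\<forall>i<NN z []. Rt e (sh i z) = top)"
  unfolding Rt_def[of e z] by (subst Rtv_top_iff) (simp add: Rt_sh)

lemma pred_in_tree[measurable]: "Measurable.pred SP (\<lambda>z. in_tree (NN z) v)"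
  by (induction v) simp_all

lemma pred_extinct[measurable]: "Measurable.pred SP (\<lambda>z. extinct (NN z))"
proof -
  have "extinct (NN z) \<longleftrightarrow> (\<exists>n. \<forall>v. length v = n \<longrightarrow> \<not> in_tree (NN z) v)" for z
    by (auto simp: extinct_def generation_def)
  moreover have "Measurable.pred SP (\<lambda>z. \<exists>n::nat. \<forall>v. length v = n \<longrightarrow> \<not> in_tree (NN z) v)"
    by measurable
  ultimately show ?thesis by simp
qed

lemma extinct_sh_iff: "extinct (NN z) \<longleftrightarrow> (\<forall>i<NN z []. extinct (NN (sh i z)))"
  by (subst extinct_iff) (simp add: NN_sh)

context gwp begin

lemma meas_P[simp]: "measurable P X = measurable SP X"
  by (rule measurable_cong_sets) simp_all

lemma int_sh:
  fixes f :: "cfg \<Rightarrow> real"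
  assumes [measurable]: "f \<in> borel_measurable SP"
  shows "(\<integral>z. f (sh i z) \<partial>P) = (\<integral>z. f z \<partial>P)"
proof -
  have "(\<integral>z. f (sh i z) \<partial>P) = integral\<^sup>L (distr P SP (sh i)) f"
    by (rule integral_distr[symmetric]) simp_all
  then show ?thesis by (simp add: P_sh)
qed

lemma int_if:
  assumes [measurable]: "Measurable.pred SP Q"
  shows "(\<integral>z. (if Q z then 1 else 0) \<partial>P) = measure P {z. Q z}"
proof -
  have "(\<lambda>z. if Q z then 1 else 0 :: real) = indicator {z. Q z}"
    by (auto simp: fun_eq_iff indicator_def)
  moreover have "{z. Q z} \<in> sets P" using assms by (simp add: pred_def)
  ultimately show ?thesis by simp
qed

lemma int_bounded:
  fixes f :: "cfg \<Rightarrow> real" and B :: real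
  assumes "f \<in> borel_measurable SP" "\<And>z. \<bar>f z\<bar> \<le> B"
  shows "integrable P f"
  by (rule PP.integrable_const_bound[where B=B]) (use assms in simp_all)

definition pN :: "nat \<Rightarrow> real" where "pN n = measure P {z. NN z [] = n}"

lemma pN_nonneg: "0 \<le> pN n" by (simp add: pN_def)

lemma pN_sums: "pN sums 1"
proof -
  have "(\<lambda>n. measure P {z. NN z [] = n}) sums measure P (\<Union>n. {z. NN z [] = n})"
    using pred_NN_eq[of "[]"]
    by (intro PP.finite_measure_UNION) (auto simp: disjoint_family_on_def pred_def)
  moreover have "(\<Union>n. {z. NN z [] = n}) = space P" by auto
  ultimately show ?thesis using PP.prob_space unfolding pN_def[abs_def] by simp
qed

lemma FP:
  assumes E[measurable]: "E \<in> sets SP"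
  shows "(\<lambda>n. pN n * measure P E ^ n) sums measure P {z. \<forall>i<NN z []. sh i z \<in> E}"
proof -
  define S where "S n = {z. NN z [] = n \<and> (\<forall>i<n. sh i z \<in> E)}" for n
  have shE[measurable]: "Measurable.pred SP (\<lambda>z. sh i z \<in> E)" for i by (rule pred_sets2[OF E meas_sh])
  have "Measurable.pred SP (\<lambda>z. NN z [] = n \<and> (\<forall>i<n. sh i z \<in> E))" for n by measurable
  then have Sm: "S n \<in> sets P" for n unfolding S_def by (simp add: sets_Collect_SP)
  have r: "range S \<subseteq> sets P" using Sm by auto
  have d: "disjoint_family S" by (auto simp: disjoint_family_on_def S_def)
  have "(\<lambda>n. measure P (S n)) sums measure P (\<Union>n. S n)"
    by (rule PP.finite_measure_UNION[OF r d])
  moreover have "(\<Union>n. S n) = {z. \<forall>i<NN z []. sh i z \<in> E}" by (auto simp: S_def)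
  moreover have "measure P (S n) = pN n * measure P E ^ n" for n
  proof -
    define H :: "nat option \<Rightarrow> cfg \<Rightarrow> real" where
      "H l z = (case l of None \<Rightarrow> (if NN z [] = n then 1 else 0) | Some i \<Rightarrow> (if sh i z \<in> E then 1 else 0))" for l z
    define K :: "nat option \<Rightarrow> idx set" where
      "K l = (case l of None \<Rightarrow> {Inl []} | Some i \<Rightarrow> range (shj i))" for l
    define I where "I = insert None (Some ` {..<n})"
    have Hm: "H l \<in> borel_measurable SP" for l
      by (cases l; simp add: H_def[abs_def]; measurable)
    have prodH: "(\<Prod>l\<in>I. H l z) = (if z \<in> S n then 1 else 0)" for z
    proof -
      have "(\<Prod>l\<in>I. H l z) = H None z * (\<Prod>i<n. H (Some i) z)"
        by (simp add: I_def prod.reindex)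
      also have "(\<Prod>i<n. H (Some i) z) = (if \<forall>i\<in>{..<n}. sh i z \<in> E then 1 else 0)"
        unfolding H_def by (simp add: prod_if_all)
      finally show ?thesis by (auto simp: H_def S_def)
    qed
    have "measure P (S n) = (\<integral>z. (if z \<in> S n then 1 else 0) \<partial>P)"
      using int_if[of "\<lambda>z. z \<in> S n"] Sm by simp
    also have "\<dots> = (\<integral>z. (\<Prod>l\<in>I. H l z) \<partial>P)" by (simp add: prodH)
    also have "\<dots> = (\<Prod>l\<in>I. \<integral>z. H l z \<partial>P)"
    proof (rule GI[where K=K])
      show "finite I" by (simp add: I_def)
      show "disjoint_family_on K I"
        unfolding disjoint_family_on_def I_def K_def
        by (auto simp: shj_disj split: option.splits)
      show "H l \<in> borel_measurable SP" for l by (rule Hm)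
      show "H l z = H l z'" if "l \<in> I" "\<And>j. j \<in> K l \<Longrightarrow> z j = z' j" for l z z'
      proof (cases l)
        case None
        then have "z (Inl []) = z' (Inl [])" using that(2) by (simp add: K_def)
        then show ?thesis using None by (simp add: H_def NN_def)
      next
        case (Some i)
        then have "sh i z = sh i z'" using that(2) by (auto simp: K_def sh_def)
        then show ?thesis using Some by (simp add: H_def)
      qed
      show "integrable P (H l)" for l
        by (rule int_bounded[OF Hm, where B=1]) (simp add: H_def split: option.splits)
    qed
    also have "\<dots> = (\<integral>z. H None z \<partial>P) * (\<Prod>i<n. \<integral>z. H (Some i) z \<partial>P)"
      by (simp add: I_def prod.reindex)
    also have "\<dots> = pN n * measure P E ^ n"
    proof -
      have HN: "(\<integral>z. H None z \<partial>P) = pN n"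
        by (simp add: H_def pN_def int_if)
      have HS: "(\<integral>z. H (Some i) z \<partial>P) = measure P E" for i
      proof -
        have "(\<integral>z. H (Some i) z \<partial>P) = (\<integral>z. (\<lambda>y. if y \<in> E then 1 else 0) (sh i z) \<partial>P)"
          by (simp add: H_def)
        also have "\<dots> = (\<integral>z. (if z \<in> E then 1 else 0) \<partial>P)"
          by (rule int_sh) simp
        also have "\<dots> = measure P E" by (simp add: int_if)
        finally show ?thesis .
      qed
      show ?thesis by (simp add: HN HS)
    qed
    finally show ?thesis by simp
  qed
  ultimately show ?thesis by simp
qed

lemma FP_Rt: "(\<lambda>n. pN n * measure P {z. Rt e z = top} ^ n) sums measure P {z. Rt e z = top}"
proof -
  have eq: "{z. \<forall>i<NN z []. sh i z \<in> {z. Rt e z = top}} = {z. Rt e z = top}"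
    by (simp only: mem_Collect_eq) (rule Collect_cong, rule Rt_top_iff[symmetric])
  have "{z. Rt e z = top} \<in> sets SP" by (rule sets_Collect_SP) measurable
  from FP[OF this] show ?thesis unfolding eq .
qed

lemma FP_ext: "(\<lambda>n. pN n * measure P {z. extinct (NN z)} ^ n) sums measure P {z. extinct (NN z)}"
proof -
  have eq: "{z. \<forall>i<NN z []. sh i z \<in> {z. extinct (NN z)}} = {z. extinct (NN z)}"
    by (simp only: mem_Collect_eq) (rule Collect_cong, rule extinct_sh_iff[symmetric])
  have "{z. extinct (NN z)} \<in> sets SP" by (rule sets_Collect_SP) measurable
  from FP[OF this] show ?thesis unfolding eq .
qed

end


fun pres :: "nat \<Rightarrow> real \<Rightarrow> nat \<Rightarrow> cfg \<Rightarrow> ennreal" where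
  "pres Cb e 0 z = 0"
| "pres Cb e (Suc m) z = inverse (\<Sum>i<Cb. if i < NN z [] then
      inverse (ennreal (RR (sh i z) [] + e) + pres Cb e m (sh i z)) else 0)"

fun Bc :: "nat \<Rightarrow> real \<Rightarrow> real \<Rightarrow> real \<Rightarrow> nat \<Rightarrow> nat \<Rightarrow> cfg \<Rightarrow> nat" where
  "Bc Cb L e X n 0 z = (if pres Cb e n z \<le> ennreal X then 1 else 0)"
| "Bc Cb L e X n (Suc k) z = (\<Sum>i<Cb. if i < NN z [] \<and> RR (sh i z) [] \<le> L then Bc Cb L e X n k (sh i z) else 0)"

lemma sum_if_less_le:
  fixes b :: "nat \<Rightarrow> ennreal"
  shows "(\<Sum>i<Cb. if i < m then b i else 0) \<le> (\<Sum>i<m. b i)"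
proof -
  have "(\<Sum>i<Cb. if i < m then b i else 0) = (\<Sum>i\<in>{i\<in>{..<Cb}. i < m}. b i)"
    by (rule sum.inter_filter[symmetric]) simp
  also have "\<dots> \<le> (\<Sum>i<m. b i)"
    by (rule sum_mono2) auto
  finally show ?thesis .
qed

lemma res_sh: "res (NN z) (RR z) e m [i] = res (NN (sh i z)) (RR (sh i z)) e m []"
  using res_shift[of "NN z" "RR z" e m "[]" i] by (simp add: NN_sh RR_sh)

lemma res_le_pres: "res (NN z) (RR z) e m [] \<le> pres Cb e m z"
proof (induction m arbitrary: z)
  case 0 then show ?case by simp
next
  case (Suc m)
  define a where "a i = inverse (ennreal (RR (sh i z) [] + e) + res (NN (sh i z)) (RR (sh i z)) e m [])" for i
  define b where "b i = inverse (ennreal (RR (sh i z) [] + e) + pres Cb e m (sh i z))" for i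
  have ba: "b i \<le> a i" for i
    unfolding a_def b_def by (intro ennreal_inverse_antimono add_left_mono Suc.IH)
  have eq1: "res (NN z) (RR z) e (Suc m) [] = inverse (\<Sum>i<NN z []. a i)"
    by (simp add: a_def res_sh RR_sh)
  have eq2: "pres Cb e (Suc m) z = inverse (\<Sum>i<Cb. if i < NN z [] then b i else 0)"
    by (simp add: b_def cong: if_cong)
  have le: "(\<Sum>i<Cb. if i < NN z [] then b i else 0) \<le> (\<Sum>i<NN z []. a i)"
    using sum_if_less_le[where Cb=Cb and m="NN z []" and b=b] sum_mono[of "{..<NN z []}" b a] ba
    by (meson order_trans)
  show ?case unfolding eq1 eq2 by (rule ennreal_inverse_antimono[OF le])
qed

lemma if_le_mono: "A \<le> B \<Longrightarrow> (if c then A else 0) \<le> (if c then B else (0::ennreal))"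
  by simp

lemma pres_mono_Suc: "pres Cb e m z \<le> pres Cb e (Suc m) z"
proof (induction m arbitrary: z)
  case 0 then show ?case by simp
next
  case (Suc m)
  have "(\<Sum>i<Cb. if i < NN z [] then inverse (ennreal (RR (sh i z) [] + e) + pres Cb e (Suc m) (sh i z)) else 0)
     \<le> (\<Sum>i<Cb. if i < NN z [] then inverse (ennreal (RR (sh i z) [] + e) + pres Cb e m (sh i z)) else 0)"
    by (intro sum_mono if_le_mono ennreal_inverse_antimono add_left_mono Suc.IH)
  then show ?case by (simp only: pres.simps) (rule ennreal_inverse_antimono)
qed

lemma pres_mono: "m \<le> m' \<Longrightarrow> pres Cb e m z \<le> pres Cb e m' z"
proof (induction m' rule: dec_induct)
  case base show ?case by simp
next
  case (step k) show ?case using step.IH pres_mono_Suc[of Cb e k z] by (rule order_trans)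
qed

lemma res_mono: "m \<le> m' \<Longrightarrow> res N Rs e m v \<le> res N Rs e m' v"
  using res_incseq[of N Rs e v] by (simp add: incseq_def)

lemma meas_pres[measurable]: "(\<lambda>z. pres Cb e m z) \<in> borel_measurable SP"
proof (induction m)
  case 0 then show ?case by simp
next
  case (Suc m)
  note [measurable] = Suc.IH
  show ?case by (simp only: pres.simps) measurable
qed

lemma meas_Bc[measurable]: "(\<lambda>z. real (Bc Cb L e X n k z)) \<in> borel_measurable SP"
proof (induction k)
  case 0
  have "(\<lambda>z. real (Bc Cb L e X n 0 z)) = (\<lambda>z. if pres Cb e n z \<le> ennreal X then 1 else 0)"
    by (simp add: fun_eq_iff)
  moreover have "(\<lambda>z. if pres Cb e n z \<le> ennreal X then 1 else 0 :: real) \<in> borel_measurable SP"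
    by measurable
  ultimately show ?case by simp
next
  case (Suc k)
  note [measurable] = Suc.IH
  have "(\<lambda>z. real (Bc Cb L e X n (Suc k) z)) =
        (\<lambda>z. \<Sum>i<Cb. if i < NN z [] \<and> RR (sh i z) [] \<le> L then real (Bc Cb L e X n k (sh i z)) else 0)"
    by (auto simp: fun_eq_iff of_nat_sum intro!: sum.cong)
  moreover have "(\<lambda>z. \<Sum>i<Cb. if i < NN z [] \<and> RR (sh i z) [] \<le> L then real (Bc Cb L e X n k (sh i z)) else 0)
     \<in> borel_measurable SP" by measurable
  ultimately show ?case by simp
qed

lemma pres_dep:
  assumes "\<And>j. j \<noteq> Inr [] \<Longrightarrow> z j = z' j"
  shows "pres Cb e m z = pres Cb e m z'"
proof (cases m)
  case 0 then show ?thesis by simp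
next
  case (Suc m')
  have sh_eq: "sh i z = sh i z'" for i using assms by (simp add: sh_def fun_eq_iff)
  have nn_eq: "NN z [] = NN z' []" using assms by (simp add: NN_def)
  show ?thesis using Suc by (simp add: sh_eq nn_eq cong: if_cong)
qed

lemma Bc_dep:
  assumes "\<And>j. j \<noteq> Inr [] \<Longrightarrow> z j = z' j"
  shows "Bc Cb L e X n k z = Bc Cb L e X n k z'"
proof (cases k)
  case 0 then show ?thesis using pres_dep[OF assms] by simp
next
  case (Suc k')
  have sh_eq: "sh i z = sh i z'" for i using assms by (simp add: sh_def fun_eq_iff)
  have nn_eq: "NN z [] = NN z' []" using assms by (simp add: NN_def)
  show ?thesis using Suc by (simp add: sh_eq nn_eq cong: if_cong)
qed

lemma Bc_le: "Bc Cb L e X n k z \<le> Cb ^ k"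
proof (induction k arbitrary: z)
  case 0 then show ?case by simp
next
  case (Suc k)
  have "Bc Cb L e X n (Suc k) z \<le> (\<Sum>i<Cb. Cb ^ k)"
    unfolding Bc.simps by (intro sum_mono) (auto intro: Suc.IH)
  then show ?case by simp
qed

lemma Bc0_le1: "Bc Cb L e X n 0 z \<le> 1" by simp

lemma cs_parallel:
  fixes w a :: "nat \<Rightarrow> real"
  assumes S: "finite S" "S \<noteq> {}" and w: "\<And>i. i \<in> S \<Longrightarrow> 0 < w i" and a: "\<And>i. i \<in> S \<Longrightarrow> 0 < a i"
  shows "(\<Sum>i\<in>S. w i) ^ 2 \<le> (\<Sum>i\<in>S. w i ^ 2 * a i) * (\<Sum>i\<in>S. 1 / a i)"
proof -
  define W where "W = (\<Sum>i\<in>S. w i)"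
  define H where "H = (\<Sum>i\<in>S. 1 / a i)"
  have Hpos: "0 < H" unfolding H_def using S a by (intro sum_pos) auto
  define t where "t = W / H"
  have pt: "2 * w i * t - t ^ 2 * (1 / a i) \<le> w i ^ 2 * a i" if "i \<in> S" for i
  proof -
    have "0 \<le> (w i * a i - t) ^ 2 / a i" using a[OF that] by simp
    also have "(w i * a i - t) ^ 2 / a i = w i ^ 2 * a i - 2 * w i * t + t ^ 2 * (1 / a i)"
      using a[OF that] by (simp add: power2_eq_square field_simps)
    finally show ?thesis by simp
  qed
  have "(\<Sum>i\<in>S. 2 * w i * t - t ^ 2 * (1 / a i)) \<le> (\<Sum>i\<in>S. w i ^ 2 * a i)"
    by (rule sum_mono) (rule pt)
  moreover have "(\<Sum>i\<in>S. 2 * w i * t - t ^ 2 * (1 / a i)) = 2 * W * t - t ^ 2 * H"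
    by (simp add: W_def H_def sum_subtractf sum_distrib_left sum_distrib_right mult.assoc)
  moreover have "2 * W * t - t ^ 2 * H = W ^ 2 / H"
    using Hpos by (simp add: t_def power2_eq_square field_simps)
  ultimately have "W ^ 2 / H \<le> (\<Sum>i\<in>S. w i ^ 2 * a i)" by simp
  then show ?thesis using Hpos by (simp add: W_def[symmetric] H_def[symmetric] field_simps)
qed

lemma parallel_bound:
  fixes w :: "nat \<Rightarrow> real"
  assumes S: "finite S" "S \<noteq> {}" and w: "\<And>i. i \<in> S \<Longrightarrow> 1 \<le> w i" and C: "0 < C" and X: "0 \<le> X"
  shows "1 / (\<Sum>i\<in>S. 1 / (C + X / w i)) \<le> C + X / (\<Sum>i\<in>S. w i)"
proof -
  define W where "W = (\<Sum>i\<in>S. w i)"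
  have wpos: "0 < w i" if "i \<in> S" for i using w[OF that] by simp
  have apos: "0 < C + X / w i" if "i \<in> S" for i using wpos[OF that] C X by (simp add: add_pos_nonneg)
  have Wpos: "0 < W" unfolding W_def using S wpos by (intro sum_pos) auto
  define H where "H = (\<Sum>i\<in>S. 1 / (C + X / w i))"
  have Hpos: "0 < H" unfolding H_def using S apos by (intro sum_pos) auto
  have cs: "W ^ 2 \<le> (\<Sum>i\<in>S. w i ^ 2 * (C + X / w i)) * H"
    unfolding W_def H_def by (rule cs_parallel[OF S wpos apos])
  have "(\<Sum>i\<in>S. w i ^ 2 * (C + X / w i)) = (\<Sum>i\<in>S. C * w i ^ 2 + X * w i)"
    by (rule sum.cong) (use wpos in \<open>auto simp: field_simps power2_eq_square\<close>)
  also have "\<dots> = C * (\<Sum>i\<in>S. w i ^ 2) + X * W"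
    by (simp add: sum.distrib sum_distrib_left W_def)
  finally have "(\<Sum>i\<in>S. w i ^ 2 * (C + X / w i)) = C * (\<Sum>i\<in>S. w i ^ 2) + X * W" .
  moreover have "(\<Sum>i\<in>S. w i ^ 2) \<le> W ^ 2"
  proof -
    have "(\<Sum>i\<in>S. w i ^ 2) \<le> (\<Sum>i\<in>S. w i * W)"
    proof (rule sum_mono)
      fix i assume "i \<in> S"
      have "w i \<le> W" unfolding W_def using S \<open>i \<in> S\<close> wpos by (intro member_le_sum) (auto intro: less_imp_le)
      then show "w i ^ 2 \<le> w i * W" using wpos[OF \<open>i \<in> S\<close>] by (simp add: power2_eq_square)
    qed
    also have "\<dots> = W ^ 2" by (simp add: W_def sum_distrib_right power2_eq_square)
    finally show ?thesis .
  qed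
  ultimately have "(\<Sum>i\<in>S. w i ^ 2 * (C + X / w i)) \<le> C * W ^ 2 + X * W"
    using C by (simp add: mult_left_mono)
  with cs have h: "W ^ 2 \<le> (C * W ^ 2 + X * W) * H"
    using Hpos by (meson mult_right_mono less_imp_le order_trans)
  then have "W * W \<le> W * ((C * W + X) * H)" by (simp add: power2_eq_square algebra_simps)
  then have h2: "W \<le> (C * W + X) * H" using Wpos by (simp add: mult_le_cancel_left_pos)
  have "C + X / W - 1 / H = ((C * W + X) * H - W) / (W * H)"
    using Wpos Hpos by (simp add: field_simps)
  moreover have "0 \<le> ((C * W + X) * H - W) / (W * H)" using h2 Wpos Hpos by simp
  ultimately show ?thesis unfolding H_def[symmetric] W_def[symmetric] by linarith
qed


lemma Bc_bound:
  assumes e: "0 < e" and L: "0 \<le> L" and X: "0 \<le> X"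
  shows "1 \<le> Bc Cb L e X n k z \<Longrightarrow>
    pres Cb e (n + k) z \<le> ennreal (real k * (L + e) + X / real (Bc Cb L e X n k z))"
proof (induction k arbitrary: z)
  case 0
  from 0 have h: "pres Cb e n z \<le> ennreal X" by (simp split: if_splits)
  with h show ?case by simp
next
  case (Suc k)
  define c where "c = L + e"
  have c: "0 < c" using e L by (simp add: c_def)
  define Bi where "Bi i = Bc Cb L e X n k (sh i z)" for i
  define S where "S = {i \<in> {..<Cb}. i < NN z [] \<and> RR (sh i z) [] \<le> L \<and> 1 \<le> Bi i}"
  have finS: "finite S" by (simp add: S_def)
  have B_eq: "Bc Cb L e X n (Suc k) z = (\<Sum>i\<in>S. Bi i)"
  proof -
    have "Bc Cb L e X n (Suc k) z = (\<Sum>i<Cb. if i < NN z [] \<and> RR (sh i z) [] \<le> L then Bi i else 0)"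
      by (simp add: Bi_def cong: if_cong)
    also have "\<dots> = (\<Sum>i\<in>{i \<in> {..<Cb}. i < NN z [] \<and> RR (sh i z) [] \<le> L}. Bi i)"
      by (rule sum.inter_filter[symmetric]) simp
    also have "\<dots> = (\<Sum>i\<in>S. Bi i)"
      by (rule sum.mono_neutral_right) (auto simp: S_def)
    finally show ?thesis .
  qed
  have Sne: "S \<noteq> {}"
  proof
    assume "S = {}"
    then have "Bc Cb L e X n (Suc k) z = 0" using B_eq by simp
    with Suc.prems show False by simp
  qed
  define b where "b i = real (Suc k) * c + X / real (Bi i)" for i
  have bpos: "0 < b i" for i
    using c X unfolding b_def by (intro add_pos_nonneg) auto
  have A_le: "ennreal (RR (sh i z) [] + e) + pres Cb e (n + k) (sh i z) \<le> ennreal (b i)" if "i \<in> S" for i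
  proof -
    have i: "RR (sh i z) [] \<le> L" "1 \<le> Bi i" using that by (auto simp: S_def)
    have "pres Cb e (n + k) (sh i z) \<le> ennreal (real k * c + X / real (Bi i))"
      using Suc.IH[of "sh i z"] i(2) by (simp add: Bi_def c_def)
    moreover have "ennreal (RR (sh i z) [] + e) \<le> ennreal c" using i(1) by (intro ennreal_leI) (simp add: c_def)
    ultimately have "ennreal (RR (sh i z) [] + e) + pres Cb e (n + k) (sh i z)
        \<le> ennreal c + ennreal (real k * c + X / real (Bi i))"
      by (intro add_mono) auto
    also have "\<dots> = ennreal (c + (real k * c + X / real (Bi i)))"
      using c X by (intro ennreal_plus[symmetric]) auto
    also have "c + (real k * c + X / real (Bi i)) = b i" by (simp add: b_def algebra_simps)
    finally show ?thesis .
  qed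
  define Hs where "Hs = (\<Sum>i\<in>S. 1 / b i)"
  have Hpos: "0 < Hs" unfolding Hs_def using finS Sne bpos by (intro sum_pos) auto
  define f where "f i = inverse (ennreal (RR (sh i z) [] + e) + pres Cb e (n + k) (sh i z))" for i
  have "ennreal Hs \<le> (\<Sum>i<Cb. if i < NN z [] then f i else 0)"
  proof -
    have "ennreal Hs = (\<Sum>i\<in>S. ennreal (1 / b i))"
      unfolding Hs_def using bpos by (intro sum_ennreal[symmetric]) (simp add: less_imp_le)
    also have "\<dots> \<le> (\<Sum>i\<in>S. f i)"
    proof (rule sum_mono)
      fix i assume i: "i \<in> S"
      have "ennreal (1 / b i) = inverse (ennreal (b i))"
        using bpos[of i] by (simp add: inverse_ennreal inverse_eq_divide)
      also have "\<dots> \<le> f i" unfolding f_def by (rule ennreal_inverse_antimono[OF A_le[OF i]])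
      finally show "ennreal (1 / b i) \<le> f i" .
    qed
    also have "\<dots> \<le> (\<Sum>i\<in>{i\<in>{..<Cb}. i < NN z []}. f i)"
      by (rule sum_mono2) (auto simp: S_def)
    also have "\<dots> = (\<Sum>i<Cb. if i < NN z [] then f i else 0)"
      by (rule sum.inter_filter) simp
    finally show ?thesis .
  qed
  moreover have "pres Cb e (n + Suc k) z = inverse (\<Sum>i<Cb. if i < NN z [] then f i else 0)"
    by (simp add: f_def cong: if_cong)
  ultimately have "pres Cb e (n + Suc k) z \<le> inverse (ennreal Hs)"
    by (simp add: ennreal_inverse_antimono)
  also have "inverse (ennreal Hs) = ennreal (1 / Hs)"
    using Hpos by (simp add: inverse_ennreal inverse_eq_divide)
  finally have p: "pres Cb e (n + Suc k) z \<le> ennreal (1 / Hs)" .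
  have "1 / Hs = 1 / (\<Sum>i\<in>S. 1 / (real (Suc k) * c + X / real (Bi i)))"
    by (simp add: Hs_def b_def)
  also have "\<dots> \<le> real (Suc k) * c + X / (\<Sum>i\<in>S. real (Bi i))"
    by (rule parallel_bound[OF finS Sne]) (use c X in \<open>auto simp: S_def\<close>)
  also have "(\<Sum>i\<in>S. real (Bi i)) = real (Bc Cb L e X n (Suc k) z)" unfolding B_eq by simp
  finally have r: "1 / Hs \<le> real (Suc k) * (L + e) + X / real (Bc Cb L e X n (Suc k) z)"
    by (simp add: c_def)
  show ?case using order_trans[OF p ennreal_leI[OF r]] .
qed

lemma Bc_ge2:
  assumes e: "0 < e" and L: "0 \<le> L" and k: "1 \<le> k"
    and B: "2 \<le> Bc Cb L e (2 * real k * (L + e)) n k z"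
  shows "pres Cb e (n + k) z \<le> ennreal (2 * real k * (L + e))"
proof -
  define X where "X = 2 * real k * (L + e)"
  have X: "0 \<le> X" using e L by (simp add: X_def)
  have "pres Cb e (n + k) z \<le> ennreal (real k * (L + e) + X / real (Bc Cb L e X n k z))"
    using Bc_bound[OF e L X] B by (simp add: X_def)
  moreover have "X / real (Bc Cb L e X n k z) \<le> X / 2"
    using B X by (intro divide_left_mono) (auto simp: X_def)
  ultimately have "pres Cb e (n + k) z \<le> ennreal (real k * (L + e) + X / 2)"
    by (meson add_left_mono ennreal_leI order_trans)
  also have "real k * (L + e) + X / 2 = X" by (simp add: X_def)
  finally show ?thesis by (simp add: X_def)
qed


lemma sum_ind_min: "(\<Sum>i<Cb. if i < m then 1 else 0 :: real) = real (min m Cb)"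
proof -
  have "(\<Sum>i<Cb. if i < m then 1 else 0 :: real) = (\<Sum>i\<in>{i\<in>{..<Cb}. i < m}. 1)"
    by (rule sum.inter_filter[symmetric]) simp
  also have "{i\<in>{..<Cb}. i < m} = {..<min m Cb}" by auto
  finally show ?thesis by simp
qed

context gwp begin

lemma int_ind:
  assumes [measurable]: "Measurable.pred SP Q"
  shows "integrable P (\<lambda>z. if Q z then 1 else 0 :: real)"
proof (rule int_bounded[where B=1])
  show "(\<lambda>z. if Q z then 1 else 0 :: real) \<in> borel_measurable SP" by measurable
qed simp

lemma GI2:
  fixes H1 H2 :: "cfg \<Rightarrow> real"
  assumes K: "Ka \<inter> Kb = {}"
    and m1: "H1 \<in> borel_measurable SP" and m2: "H2 \<in> borel_measurable SP"
    and d1: "\<And>z z'. (\<And>j. j \<in> Ka \<Longrightarrow> z j = z' j) \<Longrightarrow> H1 z = H1 z'"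
    and d2: "\<And>z z'. (\<And>j. j \<in> Kb \<Longrightarrow> z j = z' j) \<Longrightarrow> H2 z = H2 z'"
    and i1: "integrable P H1" and i2: "integrable P H2"
  shows "(\<integral>z. H1 z * H2 z \<partial>P) = (\<integral>z. H1 z \<partial>P) * (\<integral>z. H2 z \<partial>P)"
proof -
  define H where "H b = (if b then H1 else H2)" for b
  define KK where "KK b = (if b then Ka else Kb)" for b
  have "(\<integral>z. (\<Prod>b\<in>UNIV. H b z) \<partial>P) = (\<Prod>b\<in>UNIV. \<integral>z. H b z \<partial>P)"
  proof (rule GI[where K=KK])
    show "finite (UNIV :: bool set)" by simp
    show "disjoint_family_on KK UNIV" using K by (auto simp: disjoint_family_on_def KK_def)
    show "H b \<in> borel_measurable SP" for b using m1 m2 by (simp add: H_def)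
    show "H b z = H b z'" if "b \<in> UNIV" "\<And>j. j \<in> KK b \<Longrightarrow> z j = z' j" for b z z'
    proof (cases b)
      case True
      then have "H1 z = H1 z'" using that(2) by (intro d1) (simp add: KK_def)
      then show ?thesis using True by (simp add: H_def)
    next
      case False
      then have "H2 z = H2 z'" using that(2) by (intro d2) (simp add: KK_def)
      then show ?thesis using False by (simp add: H_def)
    qed
    show "integrable P (H b)" for b using i1 i2 by (simp add: H_def)
  qed
  moreover have "(\<Prod>b\<in>UNIV. H b z) = H1 z * H2 z" for z
    by (simp add: UNIV_bool H_def mult.commute)
  moreover have "(\<Prod>b\<in>UNIV. \<integral>z. H b z \<partial>P) = (\<integral>z. H1 z \<partial>P) * (\<integral>z. H2 z \<partial>P)"
    by (simp add: UNIV_bool H_def mult.commute)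
  ultimately show ?thesis by simp
qed

lemma E_root:
  fixes F :: "cfg \<Rightarrow> real"
  assumes Fm: "F \<in> borel_measurable SP" and Fb: "\<And>z. \<bar>F z\<bar> \<le> C"
    and Fd: "\<And>z z'. (\<And>j. j \<noteq> Inr [] \<Longrightarrow> z j = z' j) \<Longrightarrow> F z = F z'"
  shows "(\<integral>z. (if RR z [] \<le> L then 1 else 0) * F z \<partial>P) = measure P {z. RR z [] \<le> L} * (\<integral>z. F z \<partial>P)"
proof -
  have "(\<integral>z. (if RR z [] \<le> L then 1 else 0) * F z \<partial>P)
      = (\<integral>z. (if RR z [] \<le> L then 1 else 0) \<partial>P) * (\<integral>z. F z \<partial>P)"
  proof (rule GI2[where Ka="{Inr []}" and Kb="- {Inr []}"])
    show "(\<lambda>z. if RR z [] \<le> L then 1 else 0 :: real) \<in> borel_measurable SP" by measurable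
    show "integrable P (\<lambda>z. if RR z [] \<le> L then 1 else 0 :: real)"
      by (rule int_ind) measurable
    show "integrable P F" by (rule int_bounded[OF Fm Fb])
    show "{Inr []} \<inter> - {Inr []} = {}" by simp
    show "F \<in> borel_measurable SP" by (rule Fm)
    show "(\<lambda>z. if RR z [] \<le> L then 1 else 0 :: real) z = (\<lambda>z. if RR z [] \<le> L then 1 else 0 :: real) z'"
      if "\<And>j. j \<in> {Inr []} \<Longrightarrow> z j = z' j" for z z'
      using that[of "Inr []"] by (simp add: RR_def)
    show "F z = F z'" if "\<And>j. j \<in> - {Inr []} \<Longrightarrow> z j = z' j" for z z'
      by (rule Fd) (use that in simp)
  qed
  also have "(\<integral>z. (if RR z [] \<le> L then 1 else 0) \<partial>P) = measure P {z. RR z [] \<le> L}"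
    by (rule int_if) measurable
  finally show ?thesis .
qed

lemma E_sh:
  fixes G :: "cfg \<Rightarrow> real"
  assumes Gm: "G \<in> borel_measurable SP" and Gb: "\<And>z. \<bar>G z\<bar> \<le> C"
  shows "(\<integral>z. (if i < NN z [] then 1 else 0) * G (sh i z) \<partial>P) = measure P {z. i < NN z []} * (\<integral>z. G z \<partial>P)"
proof -
  have Gsm: "(\<lambda>z. G (sh i z)) \<in> borel_measurable SP" using Gm by measurable
  have "(\<integral>z. (if i < NN z [] then 1 else 0) * G (sh i z) \<partial>P)
      = (\<integral>z. (if i < NN z [] then 1 else 0) \<partial>P) * (\<integral>z. G (sh i z) \<partial>P)"
  proof (rule GI2[where Ka="{Inl []}" and Kb="range (shj i)"])
    show "(\<lambda>z. if i < NN z [] then 1 else 0 :: real) \<in> borel_measurable SP" by measurable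
    show "integrable P (\<lambda>z. if i < NN z [] then 1 else 0 :: real)"
      by (rule int_ind) measurable
    show "integrable P (\<lambda>z. G (sh i z))" by (rule int_bounded[OF Gsm Gb])
    show "(\<lambda>z. if i < NN z [] then 1 else 0 :: real) z = (\<lambda>z. if i < NN z [] then 1 else 0 :: real) z'"
      if "\<And>j. j \<in> {Inl []} \<Longrightarrow> z j = z' j" for z z'
      using that by (simp add: NN_def)
    show "G (sh i z) = G (sh i z')" if "\<And>j. j \<in> range (shj i) \<Longrightarrow> z j = z' j" for z z'
    proof -
      have "sh i z = sh i z'" using that by (simp add: sh_def fun_eq_iff)
      then show ?thesis by simp
    qed
  qed (use Gsm in auto)
  also have "(\<integral>z. (if i < NN z [] then 1 else 0) \<partial>P) = measure P {z. i < NN z []}"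
    by (rule int_if) measurable
  also have "(\<integral>z. G (sh i z) \<partial>P) = (\<integral>z. G z \<partial>P)" by (rule int_sh[OF Gm])
  finally show ?thesis .
qed

lemma E_sh2:
  fixes G :: "cfg \<Rightarrow> real"
  assumes Gm: "G \<in> borel_measurable SP" and Gb: "\<And>z. \<bar>G z\<bar> \<le> C" and ij: "i \<noteq> j"
  shows "(\<integral>z. G (sh i z) * G (sh j z) \<partial>P) = (\<integral>z. G z \<partial>P) ^ 2"
proof -
  have Gsm: "(\<lambda>z. G (sh i z)) \<in> borel_measurable SP" for i using Gm by measurable
  have "(\<integral>z. G (sh i z) * G (sh j z) \<partial>P) = (\<integral>z. G (sh i z) \<partial>P) * (\<integral>z. G (sh j z) \<partial>P)"
  proof (rule GI2[where Ka="range (shj i)" and Kb="range (shj j)"])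
    show "range (shj i) \<inter> range (shj j) = {}" using ij shj_disj by blast
    show "integrable P (\<lambda>z. G (sh i z))" by (rule int_bounded[OF Gsm Gb])
    show "integrable P (\<lambda>z. G (sh j z))" by (rule int_bounded[OF Gsm Gb])
    show "G (sh i z) = G (sh i z')" if "\<And>k. k \<in> range (shj i) \<Longrightarrow> z k = z' k" for z z'
    proof -
      have "sh i z = sh i z'" using that by (simp add: sh_def fun_eq_iff)
      then show ?thesis by simp
    qed
    show "G (sh j z) = G (sh j z')" if "\<And>k. k \<in> range (shj j) \<Longrightarrow> z k = z' k" for z z'
    proof -
      have "sh j z = sh j z'" using that by (simp add: sh_def fun_eq_iff)
      then show ?thesis by simp
    qed
  qed (use Gsm in auto)
  then show ?thesis by (simp add: int_sh[OF Gm] power2_eq_square)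
qed

lemma PZ:
  fixes f :: "cfg \<Rightarrow> real"
  assumes fm: "f \<in> borel_measurable SP" and fb: "\<And>z. \<bar>f z\<bar> \<le> C" and f0: "\<And>z. 0 \<le> f z"
    and m1: "4 \<le> (\<integral>z. f z \<partial>P)"
  shows "(\<integral>z. f z \<partial>P) ^ 2 / (4 * (\<integral>z. f z ^ 2 \<partial>P)) \<le> measure P {z. 2 \<le> f z}"
proof -
  define m where "m = (\<integral>z. f z \<partial>P)"
  define v where "v = (\<integral>z. f z ^ 2 \<partial>P)"
  define p where "p = measure P {z. m / 2 < f z}"
  have f2m: "(\<lambda>z. f z ^ 2) \<in> borel_measurable SP" using fm by measurable
  have f2b: "\<bar>f z ^ 2\<bar> \<le> C ^ 2" for z
  proof -
    have "\<bar>f z ^ 2\<bar> = \<bar>f z\<bar> ^ 2" by (simp add: power_abs)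
    also have "\<dots> \<le> C ^ 2" by (rule power_mono[OF fb abs_ge_zero])
    finally show ?thesis .
  qed
  have fi: "integrable P f" by (rule int_bounded[OF fm fb])
  have f2i: "integrable P (\<lambda>z. f z ^ 2)" by (rule int_bounded[OF f2m f2b])
  have pm: "Measurable.pred SP (\<lambda>z. m / 2 < f z)" using fm by measurable
  have ii: "integrable P (\<lambda>z. if m / 2 < f z then 1 else 0 :: real)"
    by (rule int_ind[OF pm])
  have key: "\<And>lam. 0 < lam \<Longrightarrow> m \<le> m / 2 + lam / 2 * v + p / (2 * lam)"
  proof -
    fix lam :: real assume lam: "0 < lam"
    have pt: "f z \<le> m / 2 + lam / 2 * f z ^ 2 + (if m / 2 < f z then 1 else 0) / (2 * lam)" for z
    proof (cases "m / 2 < f z")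
      case True
      have "0 \<le> (lam * f z - 1) ^ 2 / (2 * lam)" using lam by simp
      also have "(lam * f z - 1) ^ 2 / (2 * lam) = lam / 2 * f z ^ 2 + 1 / (2 * lam) - f z"
        using lam by (simp add: power2_eq_square field_simps)
      finally show ?thesis using True m1 lam by (simp add: m_def)
    next
      case False
      have a: "f z \<le> m / 2" using False by simp
      have b: "0 \<le> lam / 2 * f z ^ 2" using lam by simp
      have c: "(if m / 2 < f z then 1 else 0) / (2 * lam) = 0" using False by simp
      show ?thesis unfolding c using a b by linarith
    qed
    have "m \<le> (\<integral>z. m / 2 + lam / 2 * f z ^ 2 + (if m / 2 < f z then 1 else 0) / (2 * lam) \<partial>P)"
      unfolding m_def[of] by (rule integral_mono) (use fi f2i ii pt in \<open>auto simp: m_def\<close>)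
    also have "\<dots> = m / 2 + lam / 2 * v + p / (2 * lam)"
      using f2i ii pm PP.prob_space by (simp add: v_def p_def int_if)
    finally show "m \<le> m / 2 + lam / 2 * v + p / (2 * lam)" .
  qed
  have "0 < v"
  proof -
    have "m \<le> m / 2 + 1 / 2 * v + p / (2 * 1)" by (rule key) simp
    moreover have "p \<le> 1" by (simp add: p_def)
    ultimately show ?thesis using m1 by (simp add: m_def)
  qed
  have mpos: "0 < m" using m1 by (simp add: m_def)
  have "m \<le> m / 2 + (m / (2 * v)) / 2 * v + p / (2 * (m / (2 * v)))"
    by (rule key) (use mpos \<open>0 < v\<close> in simp)
  then have "m \<le> m / 2 + m / 4 + p * v / m" using mpos \<open>0 < v\<close> by (simp add: field_simps)
  then have "m / 4 \<le> p * v / m" by linarith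
  then have "m * m / 4 \<le> p * v" using mpos by (simp add: field_simps)
  then have "m ^ 2 / (4 * v) \<le> p" using \<open>0 < v\<close> by (simp add: field_simps power2_eq_square)
  also have "p \<le> measure P {z. 2 \<le> f z}"
    unfolding p_def
  proof (rule PP.finite_measure_mono)
    show "{z. m / 2 < f z} \<subseteq> {z. 2 \<le> f z}" using m1 by (auto simp: m_def)
    show "{z. 2 \<le> f z} \<in> sets P" using fm by (simp add: sets_Collect_SP)
  qed
  finally show ?thesis by (simp add: m_def v_def)
qed

end


lemma sq_sum_bound:
  fixes x y :: "nat \<Rightarrow> real"
  assumes x: "\<And>i. x i = 0 \<or> x i = 1" and y: "\<And>i. 0 \<le> y i"
  shows "(\<Sum>i<n. x i * y i) ^ 2 \<le> (\<Sum>i<n. x i * y i ^ 2) + (\<Sum>i<n. \<Sum>j<n. if i = j then 0 else y i * y j)"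
proof -
  define a where "a i = x i * y i" for i
  have "(\<Sum>i<n. x i * y i) ^ 2 = (\<Sum>i<n. \<Sum>j<n. a i * a j)"
    by (simp add: a_def power2_eq_square sum_product)
  also have "\<dots> = (\<Sum>i<n. \<Sum>j<n. (if i = j then a i * a j else 0) + (if i = j then 0 else a i * a j))"
    by (intro sum.cong refl) auto
  also have "\<dots> = (\<Sum>i<n. a i * a i) + (\<Sum>i<n. \<Sum>j<n. if i = j then 0 else a i * a j)"
    by (simp add: sum.distrib)
  also have "(\<Sum>i<n. a i * a i) = (\<Sum>i<n. x i * y i ^ 2)"
    by (intro sum.cong refl) (use x in \<open>auto simp: a_def power2_eq_square\<close>)
  also have "(\<Sum>i<n. \<Sum>j<n. if i = j then 0 else a i * a j) \<le> (\<Sum>i<n. \<Sum>j<n. if i = j then 0 else y i * y j)"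
  proof (intro sum_mono)
    fix i j
    have "a i * a j \<le> y i * y j"
      using x[of i] x[of j] y[of i] y[of j] by (auto simp: a_def)
    then show "(if i = j then 0 else a i * a j) \<le> (if i = j then 0 else y i * y j)" by simp
  qed
  finally show ?thesis by simp
qed

context gwp begin

context
  fixes Cb :: nat and L e X :: real and n :: nat
begin

definition "BB k z = real (Bc Cb L e X n k z)"
definition "psi k z = (if RR z [] \<le> L then 1 else 0) * BB k z"
definition "pL = measure P {z. RR z [] \<le> L}"
definition "mN = (\<integral>z. real (min (NN z []) Cb) \<partial>P)"

lemma BB_meas[measurable]: "BB k \<in> borel_measurable SP"
  unfolding BB_def[abs_def] by measurable

lemma psi_meas[measurable]: "psi k \<in> borel_measurable SP"
  unfolding psi_def[abs_def] by measurable

lemma BB_bnd: "\<bar>BB k z\<bar> \<le> real Cb ^ k"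
  using Bc_le[of Cb L e X n k z] unfolding BB_def by (simp add: of_nat_power[symmetric] del: of_nat_power)

lemma BB_nonneg: "0 \<le> BB k z" by (simp add: BB_def)

lemma psi_bnd: "\<bar>psi k z\<bar> \<le> real Cb ^ k"
  using BB_bnd[of k z] BB_nonneg[of k z] by (simp add: psi_def)

lemma psi_nonneg: "0 \<le> psi k z" using BB_nonneg by (simp add: psi_def)

lemma BB_sq_bnd: "\<bar>BB k z ^ 2\<bar> \<le> (real Cb ^ k) ^ 2"
  using BB_bnd[of k z] BB_nonneg[of k z] by (simp add: power_mono)

lemma psi_sq_bnd: "\<bar>psi k z ^ 2\<bar> \<le> (real Cb ^ k) ^ 2"
  using psi_bnd[of k z] psi_nonneg[of k z] by (simp add: power_mono)

lemma BB_int: "integrable P (BB k)" by (rule int_bounded[OF BB_meas BB_bnd])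
lemma BB_sq_int: "integrable P (\<lambda>z. BB k z ^ 2)" by (rule int_bounded[OF _ BB_sq_bnd]) measurable

lemma BB_dep: "(\<And>j. j \<noteq> Inr [] \<Longrightarrow> z j = z' j) \<Longrightarrow> BB k z = BB k z'"
  unfolding BB_def by (simp add: Bc_dep[of z z'])

lemma BB_Suc: "BB (Suc k) z = (\<Sum>i<Cb. (if i < NN z [] then 1 else 0) * psi k (sh i z))"
  unfolding BB_def psi_def by (auto simp: of_nat_sum intro!: sum.cong)

lemma E_psi: "(\<integral>z. psi k z \<partial>P) = pL * (\<integral>z. BB k z \<partial>P)"
  unfolding psi_def pL_def by (rule E_root[OF BB_meas BB_bnd BB_dep])

lemma E_psi2: "(\<integral>z. psi k z ^ 2 \<partial>P) = pL * (\<integral>z. BB k z ^ 2 \<partial>P)"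
proof -
  have "(\<lambda>z. psi k z ^ 2) = (\<lambda>z. (if RR z [] \<le> L then 1 else 0) * BB k z ^ 2)"
    by (auto simp: psi_def fun_eq_iff power2_eq_square)
  moreover have "(\<integral>z. (if RR z [] \<le> L then 1 else 0) * BB k z ^ 2 \<partial>P) = pL * (\<integral>z. BB k z ^ 2 \<partial>P)"
  proof -
    have d: "BB k z ^ 2 = BB k z' ^ 2" if "\<And>j. j \<noteq> Inr [] \<Longrightarrow> z j = z' j" for z z'
      using BB_dep[OF that] by simp
    have m: "(\<lambda>z. BB k z ^ 2) \<in> borel_measurable SP" by measurable
    show ?thesis unfolding pL_def by (rule E_root[OF m BB_sq_bnd d])
  qed
  ultimately show ?thesis by simp
qed

lemma sumP: "(\<Sum>i<Cb. measure P {z. i < NN z []}) = mN"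
proof -
  have "(\<Sum>i<Cb. measure P {z. i < NN z []}) = (\<Sum>i<Cb. \<integral>z. (if i < NN z [] then 1 else 0) \<partial>P)"
    by (intro sum.cong refl) (simp add: int_if)
  also have "\<dots> = (\<integral>z. (\<Sum>i<Cb. if i < NN z [] then 1 else 0) \<partial>P)"
  proof -
    have ii: "\<And>i. integrable P (\<lambda>z. if i < NN z [] then 1 else 0 :: real)" by (rule int_ind) measurable
    show ?thesis by (simp add: Bochner_Integration.integral_sum ii)
  qed
  also have "\<dots> = mN" by (simp add: sum_ind_min mN_def)
  finally show ?thesis .
qed

lemma pL_le1: "pL \<le> 1" by (simp add: pL_def)
lemma pL_nonneg: "0 \<le> pL" by (simp add: pL_def)

lemma int_term: "integrable P (\<lambda>z. (if i < NN z [] then 1 else 0) * G (sh i z))"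
  if "G \<in> borel_measurable SP" "\<And>z. \<bar>G z\<bar> \<le> C" for G :: "cfg \<Rightarrow> real" and C
proof (rule int_bounded[where B=C])
  show "(\<lambda>z. (if i < NN z [] then 1 else 0) * G (sh i z)) \<in> borel_measurable SP"
    using that(1) by measurable
  show "\<bar>(if i < NN z [] then 1 else 0) * G (sh i z)\<bar> \<le> C" for z
    using that(2)[of "sh i z"] that(2)[of z] by auto
qed

lemma E1_Suc: "(\<integral>z. BB (Suc k) z \<partial>P) = mN * pL * (\<integral>z. BB k z \<partial>P)"
proof -
  have "(\<integral>z. BB (Suc k) z \<partial>P) = (\<integral>z. (\<Sum>i<Cb. (if i < NN z [] then 1 else 0) * psi k (sh i z)) \<partial>P)"
    by (simp add: BB_Suc)
  also have "\<dots> = (\<Sum>i<Cb. \<integral>z. (if i < NN z [] then 1 else 0) * psi k (sh i z) \<partial>P)"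
    by (simp add: Bochner_Integration.integral_sum int_term[OF psi_meas psi_bnd])
  also have "\<dots> = (\<Sum>i<Cb. measure P {z. i < NN z []} * (\<integral>z. psi k z \<partial>P))"
    by (intro sum.cong refl) (rule E_sh[OF psi_meas psi_bnd])
  also have "\<dots> = mN * pL * (\<integral>z. BB k z \<partial>P)"
    by (simp add: sum_distrib_right[symmetric] sumP E_psi)
  finally show ?thesis .
qed

lemma E2_Suc: "(\<integral>z. BB (Suc k) z ^ 2 \<partial>P) \<le> mN * pL * (\<integral>z. BB k z ^ 2 \<partial>P) + real Cb ^ 2 * (\<integral>z. BB k z \<partial>P) ^ 2"
proof -
  define I where "I i z = (if i < NN z [] then 1 else 0 :: real)" for i z
  define R where "R z = (\<Sum>i<Cb. I i z * psi k (sh i z) ^ 2) + (\<Sum>i<Cb. \<Sum>j<Cb. if i = j then 0 else psi k (sh i z) * psi k (sh j z))" for z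
  have pt: "BB (Suc k) z ^ 2 \<le> R z" for z
    unfolding BB_Suc R_def I_def[abs_def]
    by (rule sq_sum_bound) (simp_all add: psi_nonneg)
  have psm: "(\<lambda>z. psi k (sh i z)) \<in> borel_measurable SP" for i by measurable
  have int1: "integrable P (\<lambda>z. I i z * psi k (sh i z) ^ 2)" for i
    unfolding I_def by (rule int_term[where C="(real Cb ^ k) ^ 2"]) (measurable, rule psi_sq_bnd)
  have int2: "integrable P (\<lambda>z. if i = j then 0 else psi k (sh i z) * psi k (sh j z))" for i j
  proof (rule int_bounded[where B="(real Cb ^ k) ^ 2"])
    show "(\<lambda>z. if i = j then 0 else psi k (sh i z) * psi k (sh j z)) \<in> borel_measurable SP" by measurable
    show "\<bar>if i = j then 0 else psi k (sh i z) * psi k (sh j z)\<bar> \<le> (real Cb ^ k) ^ 2" for z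
      using psi_bnd[of k "sh i z"] psi_bnd[of k "sh j z"] psi_nonneg[of k "sh i z"] psi_nonneg[of k "sh j z"]
      by (auto simp: abs_mult power2_eq_square intro: mult_mono)
  qed
  have intA: "integrable P (\<lambda>z. \<Sum>i<Cb. I i z * psi k (sh i z) ^ 2)"
    by (rule Bochner_Integration.integrable_sum) (rule int1)
  have intB: "integrable P (\<lambda>z. \<Sum>i<Cb. \<Sum>j<Cb. if i = j then 0 else psi k (sh i z) * psi k (sh j z))"
    by (rule Bochner_Integration.integrable_sum, rule Bochner_Integration.integrable_sum, rule int2)
  have intR: "integrable P R" unfolding R_def by (rule Bochner_Integration.integrable_add[OF intA intB])
  have "(\<integral>z. BB (Suc k) z ^ 2 \<partial>P) \<le> (\<integral>z. R z \<partial>P)"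
    by (rule integral_mono[OF BB_sq_int intR pt])
  also have "(\<integral>z. R z \<partial>P) = (\<Sum>i<Cb. \<integral>z. I i z * psi k (sh i z) ^ 2 \<partial>P)
      + (\<Sum>i<Cb. \<Sum>j<Cb. \<integral>z. (if i = j then 0 else psi k (sh i z) * psi k (sh j z)) \<partial>P)"
  proof -
    have "(\<integral>z. R z \<partial>P) = (\<integral>z. (\<Sum>i<Cb. I i z * psi k (sh i z) ^ 2) \<partial>P)
      + (\<integral>z. (\<Sum>i<Cb. \<Sum>j<Cb. if i = j then 0 else psi k (sh i z) * psi k (sh j z)) \<partial>P)"
      unfolding R_def by (rule Bochner_Integration.integral_add[OF intA intB])
    also have "(\<integral>z. (\<Sum>i<Cb. I i z * psi k (sh i z) ^ 2) \<partial>P) = (\<Sum>i<Cb. \<integral>z. I i z * psi k (sh i z) ^ 2 \<partial>P)"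
      by (rule Bochner_Integration.integral_sum) (rule int1)
    also have "(\<integral>z. (\<Sum>i<Cb. \<Sum>j<Cb. if i = j then 0 else psi k (sh i z) * psi k (sh j z)) \<partial>P)
      = (\<Sum>i<Cb. \<integral>z. (\<Sum>j<Cb. if i = j then 0 else psi k (sh i z) * psi k (sh j z)) \<partial>P)"
      by (rule Bochner_Integration.integral_sum) (rule Bochner_Integration.integrable_sum, rule int2)
    also have "\<dots> = (\<Sum>i<Cb. \<Sum>j<Cb. \<integral>z. (if i = j then 0 else psi k (sh i z) * psi k (sh j z)) \<partial>P)"
      by (intro sum.cong refl Bochner_Integration.integral_sum int2)
    finally show ?thesis .
  qed
  also have "(\<Sum>i<Cb. \<integral>z. I i z * psi k (sh i z) ^ 2 \<partial>P) = mN * pL * (\<integral>z. BB k z ^ 2 \<partial>P)"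
  proof -
    have "(\<Sum>i<Cb. \<integral>z. I i z * psi k (sh i z) ^ 2 \<partial>P) = (\<Sum>i<Cb. measure P {z. i < NN z []} * (\<integral>z. psi k z ^ 2 \<partial>P))"
      unfolding I_def
      by (intro sum.cong refl) (rule E_sh[where G="\<lambda>z. psi k z ^ 2", OF _ psi_sq_bnd], measurable)
    also have "\<dots> = mN * pL * (\<integral>z. BB k z ^ 2 \<partial>P)"
      by (simp add: sum_distrib_right[symmetric] sumP E_psi2)
    finally show ?thesis .
  qed
  also have "(\<Sum>i<Cb. \<Sum>j<Cb. \<integral>z. (if i = j then 0 else psi k (sh i z) * psi k (sh j z)) \<partial>P)
      \<le> (\<Sum>i<Cb. \<Sum>j<Cb. (pL * (\<integral>z. BB k z \<partial>P)) ^ 2)"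
  proof (intro sum_mono)
    fix i j
    show "(\<integral>z. (if i = j then 0 else psi k (sh i z) * psi k (sh j z)) \<partial>P) \<le> (pL * (\<integral>z. BB k z \<partial>P)) ^ 2"
    proof (cases "i = j")
      case True then show ?thesis by simp
    next
      case False
      then have "(\<integral>z. (if i = j then 0 else psi k (sh i z) * psi k (sh j z)) \<partial>P) = (\<integral>z. psi k z \<partial>P) ^ 2"
        using E_sh2[OF psi_meas psi_bnd False] by simp
      then show ?thesis by (simp add: E_psi)
    qed
  qed
  also have "(\<Sum>i<Cb. \<Sum>j<Cb. (pL * (\<integral>z. BB k z \<partial>P)) ^ 2) \<le> real Cb ^ 2 * (\<integral>z. BB k z \<partial>P) ^ 2"
  proof -
    have "pL ^ 2 \<le> 1" using pL_le1 pL_nonneg by (simp add: power_le_one)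
    then have "pL ^ 2 * (\<integral>z. BB k z \<partial>P) ^ 2 \<le> 1 * (\<integral>z. BB k z \<partial>P) ^ 2"
      by (rule mult_right_mono) simp
    then have "(pL * (\<integral>z. BB k z \<partial>P)) ^ 2 \<le> (\<integral>z. BB k z \<partial>P) ^ 2"
      by (simp add: power_mult_distrib)
    then have le: "real Cb ^ 2 * (pL * (\<integral>z. BB k z \<partial>P)) ^ 2 \<le> real Cb ^ 2 * (\<integral>z. BB k z \<partial>P) ^ 2"
      by (rule mult_left_mono) simp
    have eqS: "(\<Sum>i<Cb. \<Sum>j<Cb. (pL * (\<integral>z. BB k z \<partial>P)) ^ 2) = real Cb ^ 2 * (pL * (\<integral>z. BB k z \<partial>P)) ^ 2"
      by (simp add: power2_eq_square)
    show ?thesis by (rule ord_eq_le_trans[OF eqS le])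
  qed
  finally show ?thesis by simp
qed

lemma E1_closed: "(\<integral>z. BB k z \<partial>P) = (mN * pL) ^ k * (\<integral>z. BB 0 z \<partial>P)"
  by (induction k) (simp_all add: E1_Suc)

lemma E0: "(\<integral>z. BB 0 z \<partial>P) = measure P {z. pres Cb e n z \<le> ennreal X}"
proof -
  have eq: "BB 0 = (\<lambda>z. if pres Cb e n z \<le> ennreal X then 1 else 0)" by (auto simp: BB_def fun_eq_iff)
  show ?thesis unfolding eq by (rule int_if) measurable
qed

lemma E0_sq: "(\<integral>z. BB 0 z ^ 2 \<partial>P) = (\<integral>z. BB 0 z \<partial>P)"
  by (rule Bochner_Integration.integral_cong) (simp_all add: BB_def)

lemma E2_closed:
  assumes mu: "1 < mN * pL"
  defines "b \<equiv> real Cb ^ 2 / ((mN * pL) * (mN * pL - 1))"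
  shows "(\<integral>z. BB k z ^ 2 \<partial>P) \<le> (mN * pL) ^ k * (\<integral>z. BB 0 z \<partial>P) + b * ((mN * pL) ^ k * (\<integral>z. BB 0 z \<partial>P)) ^ 2"
proof (induction k)
  case 0
  have "0 \<le> b" using mu by (auto simp: b_def intro!: divide_nonneg_pos mult_pos_pos)
  then show ?case by (simp add: E0_sq)
next
  case (Suc k)
  define u where "u = mN * pL"
  define g where "g = (\<integral>z. BB 0 z \<partial>P)"
  have u: "1 < u" using mu by (simp add: u_def)
  have pz: "0 < (mN * pL) * (mN * pL - 1)" by (rule mult_pos_pos) (use mu in auto)
  have nz: "(mN * pL) * (mN * pL - 1) \<noteq> 0" using pz by linarith
  have bu: "b = real Cb ^ 2 / (u * (u - 1))" by (simp add: b_def u_def)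
  have nzu: "u * (u - 1) \<noteq> 0" using nz by (simp add: u_def)
  have "b * u * (u - 1) = real Cb ^ 2 / (u * (u - 1)) * (u * (u - 1))" unfolding bu by (simp only: mult.assoc)
  also have "\<dots> = real Cb ^ 2" using nzu by simp
  finally have bdef: "real Cb ^ 2 = b * u * (u - 1)" by simp
  have "(\<integral>z. BB (Suc k) z ^ 2 \<partial>P) \<le> u * (\<integral>z. BB k z ^ 2 \<partial>P) + real Cb ^ 2 * (u ^ k * g) ^ 2"
    using E2_Suc[of k] E1_closed[of k] by (simp add: u_def g_def)
  also have "\<dots> \<le> u * (u ^ k * g + b * (u ^ k * g) ^ 2) + real Cb ^ 2 * (u ^ k * g) ^ 2"
    using mult_left_mono[OF Suc.IH, of u] u by (simp add: u_def g_def)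
  also have "\<dots> = u ^ Suc k * g + b * (u ^ Suc k * g) ^ 2"
    unfolding bdef by (simp add: power2_eq_square algebra_simps)
  finally show ?case by (simp add: u_def g_def)
qed

end
end


lemma fp_unique_lt:
  fixes p :: "nat \<Rightarrow> real"
  assumes ps: "p sums 1" and p2: "2 \<le> m" "0 < p m" and p0: "\<And>n. 0 \<le> p n"
    and x: "0 \<le> x" "(\<lambda>n. p n * x ^ n) sums x"
    and y: "x < y" "y < 1" "(\<lambda>n. p n * y ^ n) sums y"
  shows False
proof -
  define D where "D n = (\<Sum>i<n. y ^ (n - Suc i) - x ^ (n - Suc i) * y ^ i)" for n
  have y0: "0 \<le> y" using x y by simp
  have Dnn: "0 \<le> D n" for n
    unfolding D_def
  proof (rule sum_nonneg)
    fix i assume "i \<in> {..<n}"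
    have "x ^ (n - Suc i) \<le> y ^ (n - Suc i)" using x y by (intro power_mono) auto
    moreover have "y ^ i \<le> 1" using y0 y by (intro power_le_one) auto
    ultimately have "x ^ (n - Suc i) * y ^ i \<le> y ^ (n - Suc i) * 1"
      using x y0 by (intro mult_mono) auto
    then show "0 \<le> y ^ (n - Suc i) - x ^ (n - Suc i) * y ^ i" by simp
  qed
  have Dpos: "0 < D m"
    unfolding D_def
  proof (rule sum_pos2[where i="m - 1"])
    show "finite {..<m}" by simp
    show "m - 1 \<in> {..<m}" using p2 by simp
    have "y ^ (m - 1) \<le> y ^ 1" by (rule power_decreasing) (use y0 y p2 in auto)
    then have "y ^ (m - 1) < 1" using y by simp
    then show "0 < y ^ (m - Suc (m - 1)) - x ^ (m - Suc (m - 1)) * y ^ (m - 1)"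
      using p2 by simp
    fix i assume "i \<in> {..<m}"
    have "x ^ (m - Suc i) \<le> y ^ (m - Suc i)" using x y by (intro power_mono) auto
    moreover have "y ^ i \<le> 1" using y0 y by (intro power_le_one) auto
    ultimately have "x ^ (m - Suc i) * y ^ i \<le> y ^ (m - Suc i) * 1"
      using x y0 by (intro mult_mono) auto
    then show "0 \<le> y ^ (m - Suc i) - x ^ (m - Suc i) * y ^ i" by simp
  qed
  have t_eq: "(y - x) * (1 - y ^ n) - (1 - y) * (y ^ n - x ^ n) = (y - x) * (1 - y) * D n" for n
  proof -
    have a: "1 - y ^ n = (1 - y) * (\<Sum>i<n. y ^ (n - Suc i))"
      using power_diff_sumr2[of 1 n y] by simp
    have b: "y ^ n - x ^ n = (y - x) * (\<Sum>i<n. x ^ (n - Suc i) * y ^ i)"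
      using power_diff_sumr2[of y n x] by simp
    show ?thesis unfolding a b D_def by (simp add: sum_subtractf algebra_simps)
  qed
  have s1: "(\<lambda>n. p n - p n * y ^ n) sums (1 - y)" by (rule sums_diff[OF ps y(3)])
  have s2: "(\<lambda>n. p n * y ^ n - p n * x ^ n) sums (y - x)" by (rule sums_diff[OF y(3) x(2)])
  have "(\<lambda>n. (y - x) * (p n - p n * y ^ n) - (1 - y) * (p n * y ^ n - p n * x ^ n)) sums
        ((y - x) * (1 - y) - (1 - y) * (y - x))"
    by (intro sums_diff sums_mult s1 s2)
  moreover have "(\<lambda>n. (y - x) * (p n - p n * y ^ n) - (1 - y) * (p n * y ^ n - p n * x ^ n))
      = (\<lambda>n. p n * ((y - x) * (1 - y) * D n))"
  proof (rule ext)
    fix n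
    have "(y - x) * (p n - p n * y ^ n) - (1 - y) * (p n * y ^ n - p n * x ^ n)
        = p n * ((y - x) * (1 - y ^ n) - (1 - y) * (y ^ n - x ^ n))" by (simp add: algebra_simps)
    also have "\<dots> = p n * ((y - x) * (1 - y) * D n)" by (simp only: t_eq)
    finally show "(y - x) * (p n - p n * y ^ n) - (1 - y) * (p n * y ^ n - p n * x ^ n)
        = p n * ((y - x) * (1 - y) * D n)" .
  qed
  ultimately have S: "(\<lambda>n. p n * ((y - x) * (1 - y) * D n)) sums 0" by simp
  have "0 < suminf (\<lambda>n. p n * ((y - x) * (1 - y) * D n))"
  proof (rule suminf_pos2[where i=m])
    show "summable (\<lambda>n. p n * ((y - x) * (1 - y) * D n))" using S by (rule sums_summable)
    show "0 \<le> p n * ((y - x) * (1 - y) * D n)" for n using p0[of n] Dnn[of n] y by simp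
    show "0 < p m * ((y - x) * (1 - y) * D m)" using p2 Dpos y by simp
  qed
  with S show False by (simp add: sums_iff)
qed

lemma fp_unique:
  fixes p :: "nat \<Rightarrow> real"
  assumes ps: "p sums 1" and p2: "2 \<le> m" "0 < p m" and p0: "\<And>n. 0 \<le> p n"
    and x: "0 \<le> x" "x < 1" "(\<lambda>n. p n * x ^ n) sums x"
    and y: "0 \<le> y" "y < 1" "(\<lambda>n. p n * y ^ n) sums y"
  shows "x = y"
proof (rule ccontr)
  assume "x \<noteq> y"
  then have "x < y \<or> y < x" by auto
  then show False
  proof
    assume "x < y" then show False using fp_unique_lt[OF ps p2 p0 x(1) x(3) _ y(2) y(3)] by simp
  next
    assume "y < x" then show False using fp_unique_lt[OF ps p2 p0 y(1) y(3) _ x(2) x(3)] by simp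
  qed
qed

context gwp begin

lemma step:
  assumes e: "0 < e" and L: "0 \<le> L" and mu: "1 < mN Cb * pL L"
    and k: "1 \<le> k" and muk8: "8 \<le> (mN Cb * pL L) ^ k"
    and bdef: "b = real Cb ^ 2 / ((mN Cb * pL L) * (mN Cb * pL L - 1))"
    and sdef: "s = 1 / (8 * b + 8)"
    and muks: "4 \<le> (mN Cb * pL L) ^ k * s"
    and g: "s \<le> measure P {z. pres Cb e n z \<le> ennreal (2 * real k * (L + e))}"
  shows "s \<le> measure P {z. pres Cb e (n + k) z \<le> ennreal (2 * real k * (L + e))}"
proof -
  define X where "X = 2 * real k * (L + e)"
  define u where "u = (mN Cb * pL L) ^ k"
  define g0 where "g0 = (\<integral>z. BB Cb L e X n 0 z \<partial>P)"
  define E1 where "E1 = (\<integral>z. BB Cb L e X n k z \<partial>P)"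
  define E2 where "E2 = (\<integral>z. BB Cb L e X n k z ^ 2 \<partial>P)"
  have b0: "0 \<le> b" unfolding bdef using mu by (auto intro!: divide_nonneg_pos mult_pos_pos)
  have s0: "0 < s" unfolding sdef using b0 by simp
  have g0: "s \<le> g0" using g by (simp add: g0_def E0 X_def)
  have E1eq: "E1 = u * g0" unfolding E1_def u_def g0_def by (rule E1_closed)
  have E2le: "E2 \<le> u * g0 + b * (u * g0) ^ 2" unfolding E2_def u_def g0_def bdef
    by (rule E2_closed[OF mu])
  have E1ge: "8 * s \<le> E1"
  proof -
    have "8 * s \<le> u * s" using muk8 s0 by (simp add: u_def mult_right_mono)
    also have "\<dots> \<le> u * g0" using g0 muk8 by (intro mult_left_mono) (auto simp: u_def)
    finally show ?thesis by (simp add: E1eq)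
  qed
  have E1_4: "4 \<le> E1"
  proof -
    have "u * s \<le> u * g0" using g0 muk8 by (intro mult_left_mono) (auto simp: u_def)
    then show ?thesis using muks by (simp add: E1eq u_def)
  qed
  have E2E1: "E1 \<le> E2"
    unfolding E1_def E2_def
  proof (rule integral_mono[OF BB_int BB_sq_int])
    fix z
    have "real (Bc Cb L e X n k z) \<le> real (Bc Cb L e X n k z) ^ 2"
      by (cases "Bc Cb L e X n k z") (auto simp: power2_eq_square)
    then show "BB Cb L e X n k z \<le> BB Cb L e X n k z ^ 2" by (simp add: BB_def)
  qed
  have PZ1: "E1 ^ 2 / (4 * E2) \<le> measure P {z. 2 \<le> BB Cb L e X n k z}"
    unfolding E1_def E2_def
    by (rule PZ[OF BB_meas BB_bnd BB_nonneg]) (use E1_4 in \<open>simp add: E1_def\<close>)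
  have E2pos: "0 < E2" using E1_4 E2E1 by simp
  have "s \<le> E1 ^ 2 / (4 * (E1 + b * E1 ^ 2))"
  proof -
    have sb: "8 * s * b \<le> 1" using b0 by (simp add: sdef field_simps)
    have w0: "0 < E1" using E1_4 by simp
    have "4 * s * E1 \<le> E1 ^ 2 / 2" using E1ge w0 by (simp add: power2_eq_square field_simps)
    moreover have "4 * s * (b * E1 ^ 2) \<le> E1 ^ 2 / 2"
    proof -
      have "4 * s * b * E1 ^ 2 \<le> (1 / 2) * E1 ^ 2" using sb by (intro mult_right_mono) auto
      then show ?thesis by (simp add: algebra_simps)
    qed
    ultimately have "4 * s * (E1 + b * E1 ^ 2) \<le> E1 ^ 2" by (simp add: algebra_simps)
    moreover have "0 < 4 * (E1 + b * E1 ^ 2)" using w0 b0 by (simp add: add_pos_nonneg)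
    ultimately show ?thesis by (simp add: field_simps)
  qed
  also have "E1 ^ 2 / (4 * (E1 + b * E1 ^ 2)) \<le> E1 ^ 2 / (4 * E2)"
    using E2le E2pos by (intro divide_left_mono) (auto simp: E1eq)
  also have "\<dots> \<le> measure P {z. 2 \<le> BB Cb L e X n k z}" by (rule PZ1)
  also have "\<dots> \<le> measure P {z. pres Cb e (n + k) z \<le> ennreal X}"
  proof (rule PP.finite_measure_mono)
    show "{z. 2 \<le> BB Cb L e X n k z} \<subseteq> {z. pres Cb e (n + k) z \<le> ennreal X}"
    proof
      fix z assume "z \<in> {z. 2 \<le> BB Cb L e X n k z}"
      then have "2 \<le> Bc Cb L e X n k z" by (simp add: BB_def)
      then show "z \<in> {z. pres Cb e (n + k) z \<le> ennreal X}"
        using Bc_ge2[OF e L k] by (simp add: X_def)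
    qed
    show "{z. pres Cb e (n + k) z \<le> ennreal X} \<in> sets P"
      by (simp add: sets_Collect_SP)
  qed
  finally show ?thesis by (simp add: X_def)
qed

end


lemma aux_le1: "(\<forall>m::nat. 2 \<le> m \<longrightarrow> n \<noteq> m) \<Longrightarrow> real n \<le> 1"
proof -
  assume h: "\<forall>m::nat. 2 \<le> m \<longrightarrow> n \<noteq> m"
  then have "\<not> 2 \<le> n" by blast
  then show ?thesis by simp
qed

context gwp begin

lemma iter:
  assumes e: "0 < e" and L: "0 \<le> L" and mu: "1 < mN Cb * pL L"
    and k: "1 \<le> k" and muk8: "8 \<le> (mN Cb * pL L) ^ k"
    and bdef: "b = real Cb ^ 2 / ((mN Cb * pL L) * (mN Cb * pL L - 1))"
    and sdef: "s = 1 / (8 * b + 8)"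
    and muks: "4 \<le> (mN Cb * pL L) ^ k * s"
  shows "s \<le> measure P {z. pres Cb e (j * k) z \<le> ennreal (2 * real k * (L + e))}"
proof (induction j)
  case 0
  have b0: "0 \<le> b" unfolding bdef using mu by (auto intro!: divide_nonneg_pos mult_pos_pos)
  have "s \<le> 1" unfolding sdef using b0 by simp
  moreover have "{z. pres Cb e (0 * k) z \<le> ennreal (2 * real k * (L + e))} = space P" by simp
  ultimately show ?case using PP.prob_space by simp
next
  case (Suc j)
  have "s \<le> measure P {z. pres Cb e (j * k + k) z \<le> ennreal (2 * real k * (L + e))}"
    by (rule step[OF e L mu k muk8 bdef sdef muks Suc.IH])
  then show ?case by (simp add: add.commute)
qed

lemma bound_iii:
  assumes e: "0 < e" and L: "0 \<le> L" and mu: "1 < mN Cb * pL L"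
    and k: "1 \<le> k" and muk8: "8 \<le> (mN Cb * pL L) ^ k"
    and bdef: "b = real Cb ^ 2 / ((mN Cb * pL L) * (mN Cb * pL L - 1))"
    and sdef: "s = 1 / (8 * b + 8)"
    and muks: "4 \<le> (mN Cb * pL L) ^ k * s"
  shows "measure P {z. Rt e z = top} \<le> 1 - s"
proof -
  define X where "X = 2 * real k * (L + e)"
  define A where "A j = {z. pres Cb e (j * k) z \<le> ennreal X}" for j
  have Am: "A j \<in> sets P" for j unfolding A_def by (simp add: sets_Collect_SP)
  have dec: "decseq A"
  proof (rule decseq_SucI)
    fix j
    show "A (Suc j) \<subseteq> A j"
    proof
      fix z assume "z \<in> A (Suc j)"
      moreover have "pres Cb e (j * k) z \<le> pres Cb e (Suc j * k) z" by (rule pres_mono) simp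
      ultimately show "z \<in> A j" by (auto simp: A_def)
    qed
  qed
  have lim: "(\<lambda>j. measure P (A j)) \<longlonglongrightarrow> measure P (\<Inter>j. A j)"
    by (rule PP.finite_Lim_measure_decseq) (use Am dec in auto)
  have sA: "s \<le> measure P (\<Inter>j. A j)"
    by (rule LIMSEQ_le_const[OF lim]) (use iter[OF e L mu k muk8 bdef sdef muks] in \<open>auto simp: A_def X_def\<close>)
  have sub: "{z. Rt e z = top} \<subseteq> space P - (\<Inter>j. A j)"
  proof
    fix z assume z: "z \<in> {z. Rt e z = top}"
    show "z \<in> space P - (\<Inter>j. A j)"
    proof (rule ccontr)
      assume "z \<notin> space P - (\<Inter>j. A j)"
      then have zA: "\<And>j. z \<in> A j" by auto
      have "Rt e z \<le> ennreal X"
        unfolding Rt_def Rtv_def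
      proof (rule SUP_least)
        fix m
        have "res (NN z) (RR z) e m [] \<le> res (NN z) (RR z) e (m * k) []"
          by (rule res_mono) (use k in simp)
        also have "\<dots> \<le> pres Cb e (m * k) z" by (rule res_le_pres)
        also have "\<dots> \<le> ennreal X" using zA[of m] by (simp add: A_def)
        finally show "res (NN z) (RR z) e m [] \<le> ennreal X" .
      qed
      then show False using z by (simp add: top_unique)
    qed
  qed
  have Im: "(\<Inter>j. A j) \<in> sets P"
  proof -
    have "(\<Inter>j. A j) = {z. \<forall>j. pres Cb e (j * k) z \<le> ennreal X}" by (auto simp: A_def)
    also have "\<dots> \<in> sets SP" by (rule sets_Collect_SP) measurable
    finally show ?thesis by simp
  qed
  have Cm: "space P - (\<Inter>j. A j) \<in> sets P" using Im by (rule sets.compl_sets)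
  have "measure P {z. Rt e z = top} \<le> measure P (space P - (\<Inter>j. A j))"
    by (rule PP.finite_measure_mono[OF sub Cm])
  also have "\<dots> = 1 - measure P (\<Inter>j. A j)"
    by (rule PP.prob_compl[OF Im])
  finally show ?thesis using sA by simp
qed

lemma mN_M: "mN Cb = (\<integral>\<omega>. real (min (N [] \<omega>) Cb) \<partial>M)"
proof -
  have "mN Cb = (\<integral>z. real (min (NN z []) Cb) \<partial>distr M SP Xf)" by (simp add: mN_def P_def)
  also have "\<dots> = (\<integral>\<omega>. real (min (NN (Xf \<omega>) []) Cb) \<partial>M)"
    by (rule integral_distr[OF Xf_meas]) measurable
  finally show ?thesis by (simp add: NN_Xf)
qed

lemma measure_P_M:
  assumes "S \<in> sets SP"
  shows "measure P S = measure M {\<omega> \<in> space M. Xf \<omega> \<in> S}"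
proof -
  have "measure P S = measure M (Xf -` S \<inter> space M)"
    unfolding P_def by (rule measure_distr[OF Xf_meas assms])
  also have "Xf -` S \<inter> space M = {\<omega> \<in> space M. Xf \<omega> \<in> S}" by auto
  finally show ?thesis .
qed

lemma pL_M: "pL L = measure M {\<omega> \<in> space M. Rs [] \<omega> \<le> L}"
proof -
  have "pL L = measure M {\<omega> \<in> space M. Xf \<omega> \<in> {z. RR z [] \<le> L}}"
    unfolding pL_def by (rule measure_P_M) (simp add: sets_Collect_SP)
  then show ?thesis by (simp add: RR_Xf)
qed

lemma pN_M: "pN m = measure M {\<omega> \<in> space M. N [] \<omega> = m}"
proof -
  have "pN m = measure M {\<omega> \<in> space M. Xf \<omega> \<in> {z. NN z [] = m}}"
    unfolding pN_def by (rule measure_P_M) (simp add: sets_Collect_SP)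
  then show ?thesis by (simp add: NN_Xf)
qed

lemma params:
  assumes mi: "integrable M (\<lambda>\<omega>. real (N [] \<omega>))"
    and g1: "1 < (\<integral>\<omega>. real (N [] \<omega>) \<partial>M)"
  shows "\<exists>Cb L. 0 \<le> L \<and> 1 < mN Cb * pL L"
proof -
  define \<gamma> where "\<gamma> = (\<integral>\<omega>. real (N [] \<omega>) \<partial>M)"
  have c1: "(\<lambda>C. \<integral>\<omega>. real (min (N [] \<omega>) C) \<partial>M) \<longlonglongrightarrow> \<gamma>"
    unfolding \<gamma>_def
  proof (rule integral_dominated_convergence[where w="\<lambda>\<omega>. real (N [] \<omega>)"])
    show "(\<lambda>\<omega>. real (N [] \<omega>)) \<in> borel_measurable M" by (rule realN_meas)
    show "(\<lambda>\<omega>. real (min (N [] \<omega>) C)) \<in> borel_measurable M" for C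
      using N_meas[of "[]"] by measurable
    show "integrable M (\<lambda>\<omega>. real (N [] \<omega>))" by (rule mi)
    show "AE \<omega> in M. (\<lambda>C. real (min (N [] \<omega>) C)) \<longlonglongrightarrow> real (N [] \<omega>)"
    proof (rule AE_I2)
      fix \<omega>
      have "eventually (\<lambda>C. real (min (N [] \<omega>) C) = real (N [] \<omega>)) sequentially"
        by (rule eventually_sequentiallyI[of "N [] \<omega>"]) simp
      then show "(\<lambda>C. real (min (N [] \<omega>) C)) \<longlonglongrightarrow> real (N [] \<omega>)"
        by (rule tendsto_eventually)
    qed
    show "AE \<omega> in M. norm (real (min (N [] \<omega>) C)) \<le> real (N [] \<omega>)" for C by simp
  qed
  have "(1 + \<gamma>) / 2 < \<gamma>" using g1 by (simp add: \<gamma>_def)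
  from order_tendstoD(1)[OF c1 this] obtain Cb where Cb: "(1 + \<gamma>) / 2 < (\<integral>\<omega>. real (min (N [] \<omega>) Cb) \<partial>M)"
    by (auto simp: eventually_sequentially)
  define B where "B L = {\<omega> \<in> space M. Rs [] \<omega> \<le> real L}" for L :: nat
  have Bm: "B L \<in> sets M" for L unfolding B_def using Rs_meas[of "[]"] by measurable
  have Binc: "incseq B" by (rule incseq_SucI) (auto simp: B_def)
  have "(\<Union>L. B L) = space M"
  proof
    show "(\<Union>L. B L) \<subseteq> space M" by (auto simp: B_def)
    show "space M \<subseteq> (\<Union>L. B L)"
    proof
      fix \<omega> assume "\<omega> \<in> space M"
      obtain L :: nat where "Rs [] \<omega> \<le> real L" using real_arch_simple by blast
      then show "\<omega> \<in> (\<Union>L. B L)" using \<open>\<omega> \<in> space M\<close> by (auto simp: B_def)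
    qed
  qed
  then have c2: "(\<lambda>L. measure M (B L)) \<longlonglongrightarrow> 1"
    using MM.finite_Lim_measure_incseq[of B] Bm Binc MM.prob_space by auto
  have "2 / (1 + \<gamma>) < 1" using g1 by (simp add: \<gamma>_def)
  from order_tendstoD(1)[OF c2 this] obtain L :: nat where L: "2 / (1 + \<gamma>) < measure M (B L)"
    by (auto simp: eventually_sequentially)
  have mN: "(1 + \<gamma>) / 2 < mN Cb" using Cb by (simp add: mN_M)
  have pL: "2 / (1 + \<gamma>) < pL (real L)" using L by (simp add: pL_M B_def)
  have g0: "0 < 1 + \<gamma>" using g1 by (simp add: \<gamma>_def)
  have lt: "(1 + \<gamma>) / 2 * (2 / (1 + \<gamma>)) < mN Cb * pL (real L)"
  proof -
    have "0 < (1 + \<gamma>) / 2" using g0 by simp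
    then have m0: "0 < mN Cb" using mN by linarith
    show ?thesis by (rule mult_strict_mono[OF mN pL m0]) (use g0 in simp)
  qed
  have one: "(1 + \<gamma>) / 2 * (2 / (1 + \<gamma>)) = 1" using g0 by simp
  have "1 < mN Cb * pL (real L)" using lt unfolding one .
  then show ?thesis by (intro exI[of _ Cb] exI[of _ "real L"]) simp
qed

lemma pN_pos:
  assumes mi: "integrable M (\<lambda>\<omega>. real (N [] \<omega>))"
    and g1: "1 < (\<integral>\<omega>. real (N [] \<omega>) \<partial>M)"
  shows "\<exists>m\<ge>2. 0 < pN m"
proof (rule ccontr)
  assume "\<not> (\<exists>m\<ge>2. 0 < pN m)"
  then have z: "pN m = 0" if "2 \<le> m" for m using that pN_nonneg[of m] by force
  have "AE \<omega> in M. N [] \<omega> \<noteq> m" if "2 \<le> m" for m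
  proof -
    have S: "{\<omega> \<in> space M. N [] \<omega> = m} \<in> sets M"
      using N_meas[of "[]"] by measurable
    have "emeasure M {\<omega> \<in> space M. N [] \<omega> = m} = 0"
      using z[OF that] S by (simp add: pN_M MM.emeasure_eq_measure)
    then show ?thesis by (subst AE_iff_measurable[OF S]) auto
  qed
  then have "AE \<omega> in M. \<forall>m. 2 \<le> m \<longrightarrow> N [] \<omega> \<noteq> m"
    by (subst AE_all_countable) (auto intro: AE_mp[OF _ AE_I2])
  then have "AE \<omega> in M. real (N [] \<omega>) \<le> 1"
    by eventually_elim (rule aux_le1)
  then have "(\<integral>\<omega>. real (N [] \<omega>) \<partial>M) \<le> (\<integral>\<omega>. 1 \<partial>M)"
    by (intro integral_mono_AE mi) auto
  then show False using g1 MM.prob_space by simp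
qed

end


lemma ext_sub: "{z. extinct (NN z)} \<subseteq> {z. Rt e z = top}"
proof
  fix z assume "z \<in> {z. extinct (NN z)}"
  then obtain n where "generation (NN z) n = {}" by (auto simp: extinct_def)
  then have "res_tree (NN z) (RR z) e = top" by (rule ext_res_top)
  then show "z \<in> {z. Rt e z = top}" by (simp add: Rt_def res_tree_Sup)
qed

lemma mono_sub: "0 \<le> e \<Longrightarrow> {z. Rt 0 z = top} \<subseteq> {z. Rt e z = top}"
proof
  fix z assume e: "0 \<le> e" and z: "z \<in> {z. Rt 0 z = top}"
  have "Rt 0 z \<le> Rt e z" unfolding Rt_def by (rule Rtv_mono_eps[OF e])
  then have "top \<le> Rt e z" using z by simp
  then show "z \<in> {z. Rt e z = top}" by (simp add: top_unique)
qed

context gwp begin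

lemma main_P:
  assumes mi: "integrable M (\<lambda>\<omega>. real (N [] \<omega>))" and g1: "1 < (\<integral>\<omega>. real (N [] \<omega>) \<partial>M)"
    and e: "0 < e"
  shows "measure P {z. Rt e z = top} = measure P {z. extinct (NN z)}"
proof -
  obtain Cb L where L: "0 \<le> L" and mu: "1 < mN Cb * pL L" using params[OF mi g1] by blast
  define b where "b = real Cb ^ 2 / ((mN Cb * pL L) * (mN Cb * pL L - 1))"
  define s where "s = 1 / (8 * b + 8)"
  have b0: "0 \<le> b" unfolding b_def using mu by (auto intro!: divide_nonneg_pos mult_pos_pos)
  have s0: "0 < s" unfolding s_def using b0 by simp
  obtain K where K: "max 8 (4 / s) < (mN Cb * pL L) ^ K"
    using real_arch_pow[OF mu, of "max 8 (4 / s)"] by blast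
  define k where "k = Suc K"
  have k1: "1 \<le> k" by (simp add: k_def)
  have "(mN Cb * pL L) ^ K \<le> (mN Cb * pL L) ^ k"
    unfolding k_def using mu by (intro power_increasing) auto
  then have muk: "max 8 (4 / s) < (mN Cb * pL L) ^ k" using K by simp
  have muk8: "8 \<le> (mN Cb * pL L) ^ k" using muk by simp
  have "4 / s < (mN Cb * pL L) ^ k" using muk by simp
  then have muks: "4 \<le> (mN Cb * pL L) ^ k * s" using s0 by (simp add: pos_divide_less_eq)
  have a_le: "measure P {z. Rt e z = top} \<le> 1 - s"
    by (rule bound_iii[OF e L mu k1 muk8 b_def s_def muks])
  have q_le: "measure P {z. extinct (NN z)} \<le> measure P {z. Rt e z = top}"
  proof (rule PP.finite_measure_mono[OF ext_sub])
    show "{z. Rt e z = top} \<in> sets P" by (simp add: sets_Collect_SP)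
  qed
  obtain m where m: "2 \<le> m" "0 < pN m" using pN_pos[OF mi g1] by blast
  show ?thesis
  proof (rule fp_unique[OF pN_sums m pN_nonneg])
    show "0 \<le> measure P {z. Rt e z = top}" by simp
    show "measure P {z. Rt e z = top} < 1" using a_le s0 by simp
    show "(\<lambda>n. pN n * measure P {z. Rt e z = top} ^ n) sums measure P {z. Rt e z = top}"
      by (rule FP_Rt)
    show "0 \<le> measure P {z. extinct (NN z)}" by simp
    show "measure P {z. extinct (NN z)} < 1" using q_le a_le s0 by simp
    show "(\<lambda>n. pN n * measure P {z. extinct (NN z)} ^ n) sums measure P {z. extinct (NN z)}"
      by (rule FP_ext)
  qed
qed

lemma main_P2:
  assumes mi: "integrable M (\<lambda>\<omega>. real (N [] \<omega>))" and g1: "1 < (\<integral>\<omega>. real (N [] \<omega>) \<partial>M)"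
    and e: "0 < e"
  shows "measure P {z. Rt e z = top} = measure P {z. Rt 0 z = top}"
    and "measure P {z. Rt 0 z = top} = measure P {z. extinct (NN z)}"
proof -
  have eq: "measure P {z. Rt e z = top} = measure P {z. extinct (NN z)}" by (rule main_P[OF mi g1 e])
  have q0: "measure P {z. extinct (NN z)} \<le> measure P {z. Rt 0 z = top}"
    by (rule PP.finite_measure_mono[OF ext_sub]) (simp add: sets_Collect_SP)
  have a0: "measure P {z. Rt 0 z = top} \<le> measure P {z. Rt e z = top}"
    by (rule PP.finite_measure_mono[OF mono_sub]) (use e in \<open>simp_all add: sets_Collect_SP\<close>)
  show "measure P {z. Rt e z = top} = measure P {z. Rt 0 z = top}" using eq q0 a0 by simp
  show "measure P {z. Rt 0 z = top} = measure P {z. extinct (NN z)}" using eq q0 a0 by simp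
qed

lemma Rt_Xf: "Rt e (Xf \<omega>) = res_tree (\<lambda>v. N v \<omega>) (\<lambda>v. Rs v \<omega>) e"
proof -
  have "NN (Xf \<omega>) = (\<lambda>v. N v \<omega>)" by (rule ext) (simp add: NN_Xf)
  moreover have "RR (Xf \<omega>) = (\<lambda>v. Rs v \<omega>)" by (rule ext) (simp add: RR_Xf)
  ultimately show ?thesis by (simp add: Rt_def res_tree_Sup)
qed

lemma M_Rt: "measure M {\<omega> \<in> space M. res_tree (\<lambda>v. N v \<omega>) (\<lambda>v. Rs v \<omega>) e = top} = measure P {z. Rt e z = top}"
proof -
  have "measure P {z. Rt e z = top} = measure M {\<omega> \<in> space M. Xf \<omega> \<in> {z. Rt e z = top}}"
    by (rule measure_P_M) (simp add: sets_Collect_SP)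
  then show ?thesis by (simp add: Rt_Xf)
qed

lemma M_ext: "measure M {\<omega> \<in> space M. \<exists>n0. \<forall>n\<ge>n0. generation (\<lambda>v. N v \<omega>) n = {}} = measure P {z. extinct (NN z)}"
proof -
  have "measure P {z. extinct (NN z)} = measure M {\<omega> \<in> space M. Xf \<omega> \<in> {z. extinct (NN z)}}"
    by (rule measure_P_M) (simp add: sets_Collect_SP)
  moreover have "NN (Xf \<omega>) = (\<lambda>v. N v \<omega>)" for \<omega> by (rule ext) (simp add: NN_Xf)
  ultimately show ?thesis by (simp add: extinct_alt)
qed

end

theorem lemma2:
  fixes M :: "'a measure"
    and N :: "nat list \<Rightarrow> 'a \<Rightarrow> nat"
    and Rs :: "nat list \<Rightarrow> 'a \<Rightarrow> real"
    and \<gamma> q :: real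
  assumes "prob_space M"
    and N_meas: "\<And>v. N v \<in> measurable M (count_space UNIV)"
    and Rs_meas: "\<And>v. Rs v \<in> borel_measurable M"
    and Rs_nonneg: "\<And>v \<omega>. \<omega> \<in> space M \<Longrightarrow> 0 \<le> Rs v \<omega>"
    and indep: "prob_space.indep_vars M (\<lambda>_. borel)
                  (\<lambda>j. case j of Inl v \<Rightarrow> (\<lambda>\<omega>. real (N v \<omega>)) | Inr v \<Rightarrow> Rs v) UNIV"
    and N_ident: "\<And>v. distr M (count_space UNIV) (N v) = distr M (count_space UNIV) (N [])"
    and Rs_ident: "\<And>v. distr M borel (Rs v) = distr M borel (Rs [])"
    and mean_int: "integrable M (\<lambda>\<omega>. real (N [] \<omega>))"
    and mean: "\<gamma> = integral\<^sup>L M (\<lambda>\<omega>. real (N [] \<omega>))"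
    and gamma_gt1: "1 < \<gamma>"
    and q_def: "q = measure M {\<omega> \<in> space M.
                   \<exists>n0. \<forall>n\<ge>n0. generation (\<lambda>v. N v \<omega>) n = {}}"
  shows "\<forall>\<epsilon>>0.
           measure M {\<omega> \<in> space M. res_tree (\<lambda>v. N v \<omega>) (\<lambda>v. Rs v \<omega>) \<epsilon> = top}
             = measure M {\<omega> \<in> space M. res_tree (\<lambda>v. N v \<omega>) (\<lambda>v. Rs v \<omega>) 0 = top}
         \<and> measure M {\<omega> \<in> space M. res_tree (\<lambda>v. N v \<omega>) (\<lambda>v. Rs v \<omega>) 0 = top} = q"
proof (intro allI impI)
  fix \<epsilon> :: real assume e: "0 < \<epsilon>"
  interpret G: gwp M N Rs
    by (rule gwp.intro[OF assms(1) N_meas Rs_meas indep N_ident Rs_ident])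
  have g1: "1 < (\<integral>\<omega>. real (N [] \<omega>) \<partial>M)" using gamma_gt1 mean by simp
  note r = G.main_P2[OF mean_int g1 e]
  show "measure M {\<omega> \<in> space M. res_tree (\<lambda>v. N v \<omega>) (\<lambda>v. Rs v \<omega>) \<epsilon> = top}
             = measure M {\<omega> \<in> space M. res_tree (\<lambda>v. N v \<omega>) (\<lambda>v. Rs v \<omega>) 0 = top}
         \<and> measure M {\<omega> \<in> space M. res_tree (\<lambda>v. N v \<omega>) (\<lambda>v. Rs v \<omega>) 0 = top} = q"
    using r by (simp add: G.M_Rt G.M_ext q_def)
qed


end
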